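(* Let $G=G_0*_HG_1$ be a nondegenerate free product with amalgamation, and let $K_0,K_1$ be as defined below. The following are equivalent: (i) $K_0=K_1=\{e\}$; (ii) for every finite $F\subseteq G\setminus\{e\}$ there exists $g\in G$ with $gFg^{-1}\cap H=\varnothing$; (iii) for every finite $F\subseteq H\setminus\{e\}$ there exists $g\in G$ with $gFg^{-1}\cap H=\varnothing$. Moreover, any one of these equivalent conditions implies that $G$ is a Powers group and has the free semigroup property.
   Context: The amalgam is nondegenerate if $([G_0:H]-1)([G_1:H]-1)\ge 2$. For $j=0,1$ and $k\ge1$ let $T_{j,k}=\{g_0g_1\cdots g_{k-1}: g_i\in G_{i+j \bmod 2}\setminus H\}$, and $T_{j,0}=H$. Let $C_{j,k}=\bigcap_{g\in T_{j,k}}gHg^{-1}$ and $K_j=\bigcap_{k\ge0}C_{j,k}$ for $j=0,1$. A group $G$ is a Powers group if for every finite $F\subseteq G\setminus\{e\}$ and every integer $k\ge1$ there exist a partition $G=D\sqcup E$ and elements $g_1,\dots,g_k\in G$ such that $fD\cap D=\varnothing$ for all $f\in F$ and $g_iE\cap g_jE=\varnothing$ for all distinct $i,j$. $G$ has the free semigroup property if for every finite $F\subseteq G$ there is $g\in G$ such that the subsemigroup generated by $gF$ is free on $gF$. *)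

theory Defs
  imports "HOL-Algebra.Algebra"
begin

definition word_prod :: "('a, 'b) monoid_scheme \<Rightarrow> 'a list \<Rightarrow> 'a" where
  "word_prod G xs = foldr (\<lambda>x y. x \<otimes>\<^bsub>G\<^esub> y) xs \<one>\<^bsub>G\<^esub>"

definition alt_word :: "'a set \<Rightarrow> 'a set \<Rightarrow> 'a set \<Rightarrow> nat \<Rightarrow> 'a list \<Rightarrow> bool" where
  "alt_word G0 G1 H j xs \<longleftrightarrow>
     (\<forall>i < length xs. xs ! i \<in> (if even (i + j) then G0 else G1) - H)"

text \<open>G is the (internal) free product of the subgroups G0 and G1 amalgamated over H:
  G is generated by G0 and G1, H is a common subgroup, and (normal form theorem)
  no nonempty alternating (reduced) word represents an element of H.\<close>
definition amalgam :: "('a, 'b) monoid_scheme \<Rightarrow> 'a set \<Rightarrow> 'a set \<Rightarrow> 'a set \<Rightarrow> bool" where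
  "amalgam G G0 G1 H \<longleftrightarrow>
     group G \<and> subgroup G0 G \<and> subgroup G1 G \<and> subgroup H G \<and> H \<subseteq> G0 \<and> H \<subseteq> G1 \<and>
     generate G (G0 \<union> G1) = carrier G \<and>
     (\<forall>j \<in> {0, 1}. \<forall>xs. xs \<noteq> [] \<and> alt_word G0 G1 H j xs \<longrightarrow> word_prod G xs \<notin> H)"

text \<open>Right cosets of H in the subgroup A (their number is the index [A:H]).\<close>
definition cosets_in :: "('a, 'b) monoid_scheme \<Rightarrow> 'a set \<Rightarrow> 'a set \<Rightarrow> 'a set set" where
  "cosets_in G A H = (\<Union>g\<in>A. {H #>\<^bsub>G\<^esub> g})"

text \<open>Nondegeneracy ([G0:H]-1)([G1:H]-1) >= 2, where indices may be infinite.\<close>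
definition nondegenerate :: "('a, 'b) monoid_scheme \<Rightarrow> 'a set \<Rightarrow> 'a set \<Rightarrow> 'a set \<Rightarrow> bool" where
  "nondegenerate G G0 G1 H \<longleftrightarrow>
     (let R0 = cosets_in G G0 H; R1 = cosets_in G G1 H in
       (infinite R0 \<or> card R0 \<ge> 2) \<and> (infinite R1 \<or> card R1 \<ge> 2) \<and>
       (infinite R0 \<or> infinite R1 \<or> (card R0 - 1) * (card R1 - 1) \<ge> 2))"

definition T_set :: "('a, 'b) monoid_scheme \<Rightarrow> 'a set \<Rightarrow> 'a set \<Rightarrow> 'a set \<Rightarrow> nat \<Rightarrow> nat \<Rightarrow> 'a set" where
  "T_set G G0 G1 H j k =
     (if k = 0 then H
      else {word_prod G xs | xs. length xs = k \<and> alt_word G0 G1 H j xs})"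

definition conj_set :: "('a, 'b) monoid_scheme \<Rightarrow> 'a \<Rightarrow> 'a set \<Rightarrow> 'a set" where
  "conj_set G g A = (\<lambda>a. g \<otimes>\<^bsub>G\<^esub> a \<otimes>\<^bsub>G\<^esub> inv\<^bsub>G\<^esub> g) ` A"

definition C_set :: "('a, 'b) monoid_scheme \<Rightarrow> 'a set \<Rightarrow> 'a set \<Rightarrow> 'a set \<Rightarrow> nat \<Rightarrow> nat \<Rightarrow> 'a set" where
  "C_set G G0 G1 H j k = (\<Inter>g \<in> T_set G G0 G1 H j k. conj_set G g H)"

definition K_set :: "('a, 'b) monoid_scheme \<Rightarrow> 'a set \<Rightarrow> 'a set \<Rightarrow> 'a set \<Rightarrow> nat \<Rightarrow> 'a set" where
  "K_set G G0 G1 H j = (\<Inter>k. C_set G G0 G1 H j k)"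

definition powers_group :: "('a, 'b) monoid_scheme \<Rightarrow> bool" where
  "powers_group G \<longleftrightarrow>
     (\<forall>F k. finite F \<and> F \<subseteq> carrier G - {\<one>\<^bsub>G\<^esub>} \<and> k \<ge> (1::nat) \<longrightarrow>
        (\<exists>D E g. D \<union> E = carrier G \<and> D \<inter> E = {} \<and>
           (\<forall>f\<in>F. (f <#\<^bsub>G\<^esub> D) \<inter> D = {}) \<and>
           (\<forall>i<k. g i \<in> carrier G) \<and>
           (\<forall>i<k. \<forall>i'<k. i \<noteq> i' \<longrightarrow> (g i <#\<^bsub>G\<^esub> E) \<inter> (g i' <#\<^bsub>G\<^esub> E) = {})))"

definition free_semigroup_on :: "('a, 'b) monoid_scheme \<Rightarrow> 'a set \<Rightarrow> bool" where
  "free_semigroup_on G S \<longleftrightarrow>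
     (\<forall>xs ys. xs \<noteq> [] \<and> ys \<noteq> [] \<and> set xs \<subseteq> S \<and> set ys \<subseteq> S \<and>
        word_prod G xs = word_prod G ys \<longrightarrow> xs = ys)"

definition free_semigroup_property :: "('a, 'b) monoid_scheme \<Rightarrow> bool" where
  "free_semigroup_property G \<longleftrightarrow>
     (\<forall>F. finite F \<and> F \<subseteq> carrier G \<longrightarrow>
        (\<exists>g\<in>carrier G. free_semigroup_on G (g <#\<^bsub>G\<^esub> F)))"

end

theory Submission
  imports Defs
begin

locale amalg =
  fixes G :: "('a,'b) monoid_scheme" (structure) and G0 G1 H :: "'a set"
  assumes am: "amalgam G G0 G1 H"
begin

lemma grp: "group G" using am unfolding amalgam_def by auto
sublocale group G by (rule grp)

lemma sg0: "subgroup G0 G" and sg1: "subgroup G1 G" and sgH: "subgroup H G"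
  and H0: "H \<subseteq> G0" and H1: "H \<subseteq> G1" and gen: "generate G (G0 \<union> G1) = carrier G"
  using am unfolding amalgam_def by auto

abbreviation ty :: "nat \<Rightarrow> 'a set" where "ty j \<equiv> (if even j then G0 else G1)"

abbreviation alt where "alt \<equiv> alt_word G0 G1 H"
abbreviation wp where "wp \<equiv> word_prod G"

lemma beq1[simp]: "(((a::bool) = b) = b) = a" by auto
lemma beq2[simp]: "(((a::bool) = b) = a) = b" by auto

lemma sgt: "subgroup (ty j) G" using sg0 sg1 by auto
lemma Ht: "H \<subseteq> ty j" using H0 H1 by auto
lemma typ_carrier: "ty j \<subseteq> carrier G" using sgt subgroup.subset by blast
lemma H_carrier: "H \<subseteq> carrier G" using sgH subgroup.subset by blast
lemma typ_Suc2: "ty (Suc (Suc j)) = ty j" by simp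

lemma wp_Nil[simp]: "wp [] = \<one>" unfolding word_prod_def by simp
lemma wp_Cons[simp]: "wp (x#xs) = x \<otimes> wp xs" unfolding word_prod_def by simp
lemma wp_carrier[simp]: "set xs \<subseteq> carrier G \<Longrightarrow> wp xs \<in> carrier G"
  by (induction xs) auto
lemma wp_append: "set xs \<subseteq> carrier G \<Longrightarrow> set ys \<subseteq> carrier G \<Longrightarrow> wp (xs@ys) = wp xs \<otimes> wp ys"
  by (induction xs) (auto simp: m_assoc)

definition invw :: "'a list \<Rightarrow> 'a list" where "invw xs = rev (map (\<lambda>x. inv x) xs)"
lemma invw_Cons: "invw (x#xs) = invw xs @ [inv x]" unfolding invw_def by simp
lemma invw_Nil[simp]: "invw [] = []" unfolding invw_def by simp
lemma invw_len[simp]: "length (invw xs) = length xs" unfolding invw_def by simp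
lemma invw_set: "set xs \<subseteq> carrier G \<Longrightarrow> set (invw xs) \<subseteq> carrier G" unfolding invw_def by auto
lemma wp_invw: "set xs \<subseteq> carrier G \<Longrightarrow> wp (invw xs) = inv (wp xs)"
proof (induction xs)
  case (Cons x xs)
  then show ?case using invw_set[of xs]
    by (simp add: invw_Cons wp_append inv_mult_group)
qed simp

lemma alt_Nil[simp]: "alt j []" unfolding alt_word_def by simp
lemma alt_Cons: "alt j (x#xs) \<longleftrightarrow> x \<in> ty j - H \<and> alt (Suc j) xs"
  unfolding alt_word_def by (simp only: length_Cons All_less_Suc2 nth_Cons_0 nth_Cons_Suc add_Suc add_Suc_right add_0)

lemma alt_cong: "even j = even j' \<Longrightarrow> alt j xs = alt j' xs"
  unfolding alt_word_def by (auto simp: even_add)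

lemma alt_append: "alt j (xs@ys) \<longleftrightarrow> alt j xs \<and> alt (j + length xs) ys"
  by (induction xs arbitrary: j) (auto simp: alt_Cons)

lemma alt_single: "alt j [x] \<longleftrightarrow> x \<in> ty j - H" by (simp add: alt_Cons)

lemma alt_set: "alt j xs \<Longrightarrow> set xs \<subseteq> carrier G"
  using typ_carrier by (induction xs arbitrary: j) (auto simp: alt_Cons)

lemma inv_ty: "x \<in> ty j - H \<Longrightarrow> inv x \<in> ty j - H"
proof -
  assume x: "x \<in> ty j - H"
  have c: "x \<in> carrier G" using x typ_carrier by blast
  have 1: "inv x \<in> ty j" using subgroup.m_inv_closed[OF sgt] x by blast
  have "inv x \<notin> H"
  proof
    assume "inv x \<in> H"
    then have "inv (inv x) \<in> H" using subgroup.m_inv_closed[OF sgH] by blast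
    then show False using x c by simp
  qed
  then show ?thesis using 1 by blast
qed

lemma alt_invw: "alt j xs \<Longrightarrow> alt (j + length xs + 1) (invw xs)"
proof (induction xs arbitrary: j)
  case (Cons x xs)
  then have a: "x \<in> ty j - H" "alt (Suc j) xs" by (auto simp: alt_Cons)
  have "alt (Suc j + length xs + 1) (invw xs)" using Cons a by blast
  moreover have "Suc j + length xs + 1 = j + length (x#xs) + 1" by simp
  ultimately have 1: "alt (j + length (x#xs) + 1) (invw xs)" by metis
  have "j + length (x # xs) + 1 + length xs = j + 2 * (length xs + 1)" by simp
  then have e: "even (j + length (x # xs) + 1 + length xs) = even j"
    by (cases "even j"; cases "even (length xs)"; simp)
  have "inv x \<in> ty (j + length (x # xs) + 1 + length xs) - H"
    using inv_ty[OF a(1)] by (simp only: e)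
  then have "alt (j + length (x # xs) + 1 + length (invw xs)) [inv x]"
    by (simp only: alt_single invw_len)
  then show ?case using 1 by (simp only: invw_Cons alt_append)
qed simp

lemma ax01: "\<forall>j \<in> {0, 1}. \<forall>xs. xs \<noteq> [] \<and> alt j xs \<longrightarrow> wp xs \<notin> H"
  using am unfolding amalgam_def by (elim conjE)

lemma ax: "alt j xs \<Longrightarrow> xs \<noteq> [] \<Longrightarrow> wp xs \<notin> H"
proof -
  assume a: "alt j xs" "xs \<noteq> []"
  have e: "even j = even (j mod 2)" by presburger
  have 1: "alt (j mod 2) xs" using alt_cong[OF e] a(1) by simp
  have 2: "j mod 2 \<in> {0,1}" by auto
  show ?thesis using ax01[rule_format, OF 2, of xs] 1 a(2) by simp
qed


lemma Hmul: "h \<in> H \<Longrightarrow> x \<in> ty j - H \<Longrightarrow> h \<otimes> x \<in> ty j - H"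
proof -
  assume h: "h \<in> H" and x: "x \<in> ty j - H"
  have hc: "h \<in> carrier G" using h H_carrier by blast
  have xc: "x \<in> carrier G" using x typ_carrier by blast
  have 1: "h \<otimes> x \<in> ty j" using subgroup.m_closed[OF sgt] h Ht x by blast
  have "h \<otimes> x \<notin> H"
  proof
    assume "h \<otimes> x \<in> H"
    then have "inv h \<otimes> (h \<otimes> x) \<in> H" using subgroup.m_closed[OF sgH] subgroup.m_inv_closed[OF sgH] h by blast
    then show False using x hc xc by (simp add: m_assoc[symmetric])
  qed
  then show ?thesis using 1 by blast
qed

lemma mulH: "h \<in> H \<Longrightarrow> x \<in> ty j - H \<Longrightarrow> x \<otimes> h \<in> ty j - H"
proof -
  assume h: "h \<in> H" and x: "x \<in> ty j - H"
  have hc: "h \<in> carrier G" using h H_carrier by blast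
  have xc: "x \<in> carrier G" using x typ_carrier by blast
  have 1: "x \<otimes> h \<in> ty j" using subgroup.m_closed[OF sgt] h Ht x by blast
  have "x \<otimes> h \<notin> H"
  proof
    assume "x \<otimes> h \<in> H"
    then have "(x \<otimes> h) \<otimes> inv h \<in> H" using subgroup.m_closed[OF sgH] subgroup.m_inv_closed[OF sgH] h by blast
    then show False using x hc xc by (simp add: m_assoc)
  qed
  then show ?thesis using 1 by blast
qed

definition NFe :: "'a \<Rightarrow> bool" where
  "NFe x \<longleftrightarrow> x \<in> H \<or> (\<exists>xs j. xs \<noteq> [] \<and> alt j xs \<and> x = wp xs)"

lemma NFe_ty: "g \<in> ty c \<Longrightarrow> NFe g"
proof (cases "g \<in> H")
  case False
  assume gg: "g \<in> ty c"
  then have gc: "g \<in> carrier G" using typ_carrier by blast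
  from gg have "alt c [g]" "[g] \<noteq> []" "g = wp [g]" using False gc by (auto simp: alt_single)
  then show ?thesis unfolding NFe_def by blast
qed (simp add: NFe_def)

lemma lmul: assumes g: "g \<in> ty c" and n: "NFe n" shows "NFe (g \<otimes> n)"
proof -
  have gc: "g \<in> carrier G" using g typ_carrier by blast
  show ?thesis
  proof (cases "n \<in> H")
    case True
    then have "g \<otimes> n \<in> ty c" using subgroup.m_closed[OF sgt] g Ht by blast
    then show ?thesis by (rule NFe_ty)
  next
    case False
    then obtain xs j where xs: "xs \<noteq> []" "alt j xs" "n = wp xs" using n unfolding NFe_def by blast
    then obtain x xs' where xx: "xs = x # xs'" by (cases xs) auto
    have x: "x \<in> ty j - H" and xs': "alt (Suc j) xs'" using xs xx by (auto simp: alt_Cons)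
    have xc: "x \<in> carrier G" using x typ_carrier by blast
    have xs'c: "set xs' \<subseteq> carrier G" using alt_set[OF xs'] .
    have nn: "g \<otimes> n = (g \<otimes> x) \<otimes> wp xs'" using xs xx gc xc xs'c by (simp add: m_assoc)
    show ?thesis
    proof (cases "even c = even j")
      case False
      show ?thesis
      proof (cases "g \<in> H")
        case True
        have "g \<otimes> x \<in> ty j - H" using Hmul[OF True x] .
        then have "alt j ((g \<otimes> x) # xs')" using xs' by (simp add: alt_Cons)
        then show ?thesis unfolding NFe_def using nn by (metis list.distinct(1) wp_Cons)
      next
        case gH: False
        have "alt (Suc c) (x # xs')" using alt_cong[of "Suc c" j] False xs xx by simp
        then have "alt c (g # x # xs')" using g gH by (simp add: alt_Cons)
        moreover have "g \<otimes> n = wp (g # x # xs')" using xs xx by simp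
        ultimately show ?thesis unfolding NFe_def by blast
      qed
    next
      case True
      have g': "g \<in> ty j" using g True by (simp split: if_splits)
      have gx: "g \<otimes> x \<in> ty j" using subgroup.m_closed[OF sgt] g' x by blast
      show ?thesis
      proof (cases "g \<otimes> x \<in> H")
        case False
        then have "alt j ((g \<otimes> x) # xs')" using xs' gx by (simp add: alt_Cons)
        then show ?thesis unfolding NFe_def using nn by (metis list.distinct(1) wp_Cons)
      next
        case gxH: True
        show ?thesis
        proof (cases xs')
          case Nil
          then show ?thesis using nn gxH gc xc unfolding NFe_def by simp
        next
          case (Cons y ys)
          have y: "y \<in> ty (Suc j) - H" and ys: "alt (Suc (Suc j)) ys" using xs' Cons by (auto simp: alt_Cons)
          have yc: "y \<in> carrier G" using y typ_carrier by blast
          have "(g \<otimes> x) \<otimes> y \<in> ty (Suc j) - H" using Hmul[OF gxH y] .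
          then have "alt (Suc j) (((g \<otimes> x) \<otimes> y) # ys)" using ys by (simp add: alt_Cons)
          moreover have "g \<otimes> n = wp (((g \<otimes> x) \<otimes> y) # ys)"
            using nn Cons gc xc yc alt_set[OF ys] by (simp add: m_assoc)
          ultimately show ?thesis unfolding NFe_def by blast
        qed
      qed
    qed
  qed
qed

lemma NFe_carrier: "NFe x \<Longrightarrow> x \<in> carrier G"
  unfolding NFe_def using H_carrier alt_set by auto

lemma NFe_list: "NFe x \<Longrightarrow> \<exists>ls. set ls \<subseteq> G0 \<union> G1 \<and> x = wp ls"
proof -
  assume "NFe x"
  then consider "x \<in> H" | xs j where "alt j xs" "x = wp xs" unfolding NFe_def by blast
  then show ?thesis
  proof cases
    case 1 then show ?thesis using H0 H_carrier by (intro exI[of _ "[x]"]) auto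
  next
    case 2
    have "set xs \<subseteq> G0 \<union> G1" using 2(1)
      by (induction xs arbitrary: j) (auto simp: alt_Cons split: if_splits)
    then show ?thesis using 2 by blast
  qed
qed

lemma NFe_mult_list: "set ls \<subseteq> G0 \<union> G1 \<Longrightarrow> NFe b \<Longrightarrow> NFe (wp ls \<otimes> b)"
proof (induction ls)
  case Nil then show ?case using NFe_carrier by simp
next
  case (Cons l ls)
  have lc: "l \<in> carrier G" using Cons typ_carrier[of 0] typ_carrier[of 1] by auto
  have "set ls \<subseteq> carrier G" using Cons typ_carrier[of 0] typ_carrier[of 1] by auto
  then have e: "wp (l#ls) \<otimes> b = l \<otimes> (wp ls \<otimes> b)" using lc NFe_carrier[OF Cons(3)] by (simp add: m_assoc)
  have "NFe (l \<otimes> (wp ls \<otimes> b))"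
  proof (cases "l \<in> G0")
    case True then show ?thesis using lmul[of l 0] Cons by simp
  next
    case False then have "l \<in> G1" using Cons by auto
    then show ?thesis using lmul[of l 1] Cons by simp
  qed
  then show ?case using e by simp
qed

lemma NFe_all: "x \<in> carrier G \<Longrightarrow> NFe x"
proof -
  assume "x \<in> carrier G"
  then have "x \<in> generate G (G0 \<union> G1)" using gen by simp
  then show ?thesis
  proof (induction rule: generate.induct)
    case one then show ?case unfolding NFe_def using subgroup.one_closed[OF sgH] by simp
  next
    case (incl h)
    then have "h \<in> ty 0 \<or> h \<in> ty 1" by auto
    then show ?case using NFe_ty by blast
  next
    case (inv h)
    then have "inv h \<in> ty 0 \<or> inv h \<in> ty 1"
      using subgroup.m_inv_closed[OF sg0] subgroup.m_inv_closed[OF sg1] by auto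
    then show ?case using NFe_ty by blast
  next
    case (eng a b)
    then show ?case using NFe_list[OF eng(3)] NFe_mult_list by metis
  qed
qed

lemma nf3: "x \<in> carrier G \<Longrightarrow> x \<in> H \<or> (\<exists>xs. xs \<noteq> [] \<and> alt 0 xs \<and> x = wp xs) \<or> (\<exists>xs. xs \<noteq> [] \<and> alt 1 xs \<and> x = wp xs)"
proof -
  assume "x \<in> carrier G"
  then have "NFe x" by (rule NFe_all)
  then consider "x \<in> H" | xs j where "xs \<noteq> []" "alt j xs" "x = wp xs" unfolding NFe_def by blast
  then show ?thesis
  proof cases
    case 2
    then show ?thesis using alt_cong[of j 0 xs] alt_cong[of j 1 xs] by (cases "even j") auto
  qed simp
qed


definition Tset :: "nat \<Rightarrow> 'a set" where
  "Tset j = {wp xs | xs. xs \<noteq> [] \<and> alt j xs}"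

lemma Tset_cong: "even j = even j' \<Longrightarrow> Tset j = Tset j'"
  unfolding Tset_def by (simp add: alt_cong[of j j'])

lemma Tset_carrier: "Tset j \<subseteq> carrier G"
  unfolding Tset_def using alt_set by auto

lemma Tset_H: "y \<in> Tset j \<Longrightarrow> y \<notin> H"
  unfolding Tset_def using ax by blast

lemma wp_snoc: "set ys \<subseteq> carrier G \<Longrightarrow> z \<in> carrier G \<Longrightarrow> wp (ys @ [z]) = wp ys \<otimes> z"
  by (simp add: wp_append)

lemma Tset_disj: "y \<in> Tset j \<Longrightarrow> y \<notin> Tset (Suc j)"
proof
  assume "y \<in> Tset j" "y \<in> Tset (Suc j)"
  then obtain xs ys where xs: "xs \<noteq> []" "alt j xs" "y = wp xs" and ys: "ys \<noteq> []" "alt (Suc j) ys" "y = wp ys"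
    unfolding Tset_def by blast
  have xc: "set xs \<subseteq> carrier G" and yc: "set ys \<subseteq> carrier G" using alt_set xs ys by auto
  have a1: "alt (Suc j + length ys + 1) (invw ys)" using alt_invw[OF ys(2)] .
  have "even (Suc j + length ys + 1 + length (invw ys)) = even j" by simp
  then have a2: "alt (Suc j + length ys + 1 + length (invw ys)) xs" using alt_cong xs(2) by blast
  have "alt (Suc j + length ys + 1) (invw ys @ xs)" using a1 a2 by (simp only: alt_append)
  moreover have "invw ys @ xs \<noteq> []" using xs by simp
  ultimately have "wp (invw ys @ xs) \<notin> H" by (rule ax)
  moreover have "wp (invw ys @ xs) = \<one>" using xc yc xs ys invw_set[OF yc]
    by (simp add: wp_append wp_invw)
  ultimately show False using subgroup.one_closed[OF sgH] by simp
qed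

lemma app_T: assumes "alt j xs" "xs \<noteq> []" "y \<in> H \<union> Tset (j + length xs)"
  shows "wp xs \<otimes> y \<in> Tset j"
proof -
  have xc: "set xs \<subseteq> carrier G" using alt_set assms by auto
  show ?thesis
  proof (cases "y \<in> H")
    case True
    obtain ys z where yz: "xs = ys @ [z]" using assms(2) by (cases xs rule: rev_exhaust) auto
    have ys: "alt j ys" and z: "z \<in> ty (j + length ys) - H" using assms(1) yz by (auto simp: alt_append alt_single)
    have zc: "z \<in> carrier G" and ysc: "set ys \<subseteq> carrier G" using xc yz by auto
    have yc: "y \<in> carrier G" using True H_carrier by blast
    have "z \<otimes> y \<in> ty (j + length ys) - H" using mulH[OF True z] .
    then have "alt j (ys @ [z \<otimes> y])" using ys by (simp add: alt_append alt_single)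
    moreover have "wp xs \<otimes> y = wp (ys @ [z \<otimes> y])" using yz ysc zc yc by (simp add: wp_append m_assoc)
    ultimately show ?thesis unfolding Tset_def by blast
  next
    case False
    then obtain zs where zs: "zs \<noteq> []" "alt (j + length xs) zs" "y = wp zs" using assms(3) unfolding Tset_def by blast
    have "alt j (xs @ zs)" using assms(1) zs by (simp add: alt_append)
    moreover have "wp xs \<otimes> y = wp (xs @ zs)" using zs xc alt_set[OF zs(2)] by (simp add: wp_append)
    ultimately show ?thesis using zs unfolding Tset_def by blast
  qed
qed

lemma carrier_split: "x \<in> carrier G \<Longrightarrow> x \<in> H \<or> x \<in> Tset 0 \<or> x \<in> Tset 1"
  using nf3 unfolding Tset_def by blast

definition cj :: "'a \<Rightarrow> 'a \<Rightarrow> 'a" where "cj v x = inv v \<otimes> x \<otimes> v"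

lemma cj_carrier[simp]: "v \<in> carrier G \<Longrightarrow> x \<in> carrier G \<Longrightarrow> cj v x \<in> carrier G"
  unfolding cj_def by simp

lemma cj_mult: "v \<in> carrier G \<Longrightarrow> w \<in> carrier G \<Longrightarrow> x \<in> carrier G \<Longrightarrow> cj (v \<otimes> w) x = cj w (cj v x)"
  unfolding cj_def by (simp add: inv_mult_group m_assoc)

lemma cj_inv: "v \<in> carrier G \<Longrightarrow> x \<in> carrier G \<Longrightarrow> x = v \<otimes> cj v x \<otimes> inv v"
  unfolding cj_def by (simp add: m_assoc) (simp add: m_assoc[symmetric])

lemma cj_one: "v \<in> carrier G \<Longrightarrow> x \<in> carrier G \<Longrightarrow> cj v x = \<one> \<longleftrightarrow> x = \<one>"
proof
  assume a: "v \<in> carrier G" "x \<in> carrier G" "cj v x = \<one>"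
  then show "x = \<one>" using cj_inv[OF a(1,2)] by simp
qed (simp add: cj_def)

lemma cj_wp_append: "set vs \<subseteq> carrier G \<Longrightarrow> set ws \<subseteq> carrier G \<Longrightarrow> x \<in> carrier G \<Longrightarrow>
   cj (wp (vs @ ws)) x = cj (wp ws) (cj (wp vs) x)"
  by (simp add: wp_append cj_mult)

definition good :: "'a \<Rightarrow> nat \<Rightarrow> bool" where
  "good x d \<longleftrightarrow> (\<exists>xs. alt (Suc d) xs \<and> odd (length xs) \<and> x = wp xs)"

lemma good_ext: assumes "good x d" "alt d vs" shows "good (cj (wp vs) x) (d + length vs)"
proof -
  obtain xs where xs: "alt (Suc d) xs" "odd (length xs)" "x = wp xs" using assms unfolding good_def by blast
  have vc: "set vs \<subseteq> carrier G" and xc: "set xs \<subseteq> carrier G" using alt_set assms xs by auto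
  have a1: "alt (Suc (d + length vs)) (invw vs)" using alt_invw[OF assms(2)] by simp
  have "even (Suc (d + length vs) + length (invw vs)) = even (Suc d)" by simp
  then have a2: "alt (Suc (d + length vs) + length (invw vs)) xs" using alt_cong xs(1) by blast
  have "even (Suc (d + length vs) + length (invw vs) + length xs) = even d" using xs(2) by simp
  then have a3: "alt (Suc (d + length vs) + length (invw vs) + length xs) vs" using alt_cong assms(2) by blast
  have "alt (Suc (d + length vs)) (invw vs @ xs @ vs)" using a1 a2 a3 by (simp add: alt_append)
  moreover have "odd (length (invw vs @ xs @ vs))" using xs(2) by simp
  moreover have "cj (wp vs) x = wp (invw vs @ xs @ vs)"
    using vc xc invw_set[OF vc] xs(3) unfolding cj_def by (simp add: wp_append wp_invw m_assoc)
  ultimately show ?thesis unfolding good_def by blast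
qed

lemma good_notH: "good x d \<Longrightarrow> x \<notin> H"
proof -
  assume "good x d"
  then obtain xs where xs: "alt (Suc d) xs" "odd (length xs)" "x = wp xs" unfolding good_def by blast
  then have "xs \<noteq> []" by auto
  then show ?thesis using ax[OF xs(1)] xs(3) by simp
qed

lemma good_T: "good x d \<Longrightarrow> x \<in> Tset (Suc d)"
proof -
  assume "good x d"
  then obtain xs where xs: "alt (Suc d) xs" "odd (length xs)" "x = wp xs" unfolding good_def by blast
  then have "xs \<noteq> []" by auto
  then show ?thesis using xs unfolding Tset_def by blast
qed

lemma good_carrier: "good x d \<Longrightarrow> x \<in> carrier G"
  using good_T Tset_carrier by blast

lemma good_mult: assumes "good x d" "y \<in> H \<union> Tset d" shows "x \<otimes> y \<in> Tset (Suc d)"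
proof -
  obtain xs where xs: "alt (Suc d) xs" "odd (length xs)" "x = wp xs" using assms unfolding good_def by blast
  then have ne: "xs \<noteq> []" by auto
  have "Tset d = Tset (Suc d + length xs)" using xs(2) by (intro Tset_cong) simp
  then have "y \<in> H \<union> Tset (Suc d + length xs)" using assms(2) by simp
  from app_T[OF xs(1) ne this] show ?thesis using xs(3) by simp
qed

lemma good_H: "y \<in> H \<Longrightarrow> alt d vs \<Longrightarrow> cj (wp vs) y \<notin> H \<Longrightarrow> good (cj (wp vs) y) (d + length vs)"
proof (induction vs arbitrary: y d)
  case Nil
  then show ?case using H_carrier unfolding cj_def by auto
next
  case (Cons v vs)
  have v: "v \<in> ty d - H" and vs: "alt (Suc d) vs" using Cons by (auto simp: alt_Cons)
  have vc: "v \<in> carrier G" and vsc: "set vs \<subseteq> carrier G" using v typ_carrier alt_set[OF vs] by auto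
  have yc: "y \<in> carrier G" using Cons H_carrier by blast
  have e: "cj (wp (v # vs)) y = cj (wp vs) (cj v y)" using vc vsc yc by (simp add: cj_mult)
  show ?case
  proof (cases "cj v y \<in> H")
    case True
    then show ?thesis using Cons.IH[OF True vs] Cons.prems e by simp
  next
    case False
    have ic: "inv v \<in> ty d" using subgroup.m_inv_closed[OF sgt] v by blast
    have yt: "y \<in> ty d" using Cons.prems(1) Ht by blast
    have "inv v \<otimes> y \<in> ty d" using subgroup.m_closed[OF sgt] ic yt by blast
    then have "cj v y \<in> ty d" unfolding cj_def using subgroup.m_closed[OF sgt] v by blast
    then have "cj v y \<in> ty (Suc (Suc d)) - H" using False by simp
    then have "alt (Suc (Suc d)) [cj v y]" by (simp only: alt_single)
    then have "good (cj v y) (Suc d)" unfolding good_def using vc yc by (intro exI[of _ "[cj v y]"]) simp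
    from good_ext[OF this vs] show ?thesis using e by simp
  qed
qed


lemma rcos_eq: assumes "w \<in> carrier G" "y \<in> carrier G"
  shows "H #> w = H #> y \<longleftrightarrow> w \<otimes> inv y \<in> H"
proof
  assume "H #> w = H #> y"
  then have "w \<in> H #> y" using repr_independenceD[OF sgH assms(1), of y] by simp
  then show "w \<otimes> inv y \<in> H" using subgroup.rcos_module_imp[OF sgH grp assms(2)] by blast
next
  assume "w \<otimes> inv y \<in> H"
  then have "w \<in> H #> y" using subgroup.rcos_module_rev[OF sgH grp assms(2) assms(1)] by blast
  then show "H #> w = H #> y" using repr_independence[OF _ assms(2) sgH] by simp
qed

lemma ex2_gen: assumes A: "subgroup A G" "H \<subseteq> A" and c: "infinite (cosets_in G A H) \<or> card (cosets_in G A H) \<ge> 2"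
  shows "\<exists>w\<in>A. w \<notin> H"
proof (rule ccontr)
  assume "\<not> ?thesis"
  then have allH: "\<forall>w\<in>A. w \<in> H" by blast
  have sub: "cosets_in G A H \<subseteq> {H}"
  proof
    fix Z assume "Z \<in> cosets_in G A H"
    then obtain w where w: "w \<in> A" "Z = H #> w" unfolding cosets_in_def by blast
    then have "w \<in> H" using allH by blast
    then show "Z \<in> {H}" using w coset_join2[OF _ sgH] H_carrier by blast
  qed
  have fin: "finite (cosets_in G A H)" using finite_subset[OF sub] by simp
  have "card (cosets_in G A H) \<le> card {H}" using card_mono[OF _ sub] by simp
  then show False using c fin by simp
qed

lemma three_gen: assumes A: "subgroup A G" "H \<subseteq> A" and c: "infinite (cosets_in G A H) \<or> card (cosets_in G A H) \<ge> 3"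
  and y: "y \<in> A" shows "\<exists>w\<in>A. w \<notin> H \<and> w \<otimes> inv y \<notin> H"
proof (rule ccontr)
  assume "\<not> ?thesis"
  then have allH: "\<forall>w\<in>A. w \<in> H \<or> w \<otimes> inv y \<in> H" by blast
  have Ac: "A \<subseteq> carrier G" using A(1) subgroup.subset by blast
  have yc: "y \<in> carrier G" using y Ac by blast
  have "cosets_in G A H \<subseteq> {H, H #> y}"
  proof
    fix Z assume "Z \<in> cosets_in G A H"
    then obtain w where w: "w \<in> A" "Z = H #> w" unfolding cosets_in_def by blast
    have wc: "w \<in> carrier G" using w Ac by blast
    show "Z \<in> {H, H #> y}"
    proof (cases "w \<in> H")
      case True then show ?thesis using w coset_join2[OF _ sgH] H_carrier by blast
    next
      case False then have "w \<otimes> inv y \<in> H" using allH w by blast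
      then show ?thesis using rcos_eq[OF wc yc] w by blast
    qed
  qed
  moreover have "finite {H, H #> y}" "card {H, H #> y} \<le> 2" by (auto simp: card_insert_if)
  ultimately have fin: "finite (cosets_in G A H)" and "card (cosets_in G A H) \<le> 2"
    using finite_subset[of "cosets_in G A H" "{H, H #> y}"] card_mono[of "{H, H #> y}" "cosets_in G A H"] by linarith+
  then show False using c by simp
qed

definition three :: "nat \<Rightarrow> bool" where
  "three j \<longleftrightarrow> (\<forall>y\<in>ty j. \<exists>w\<in>ty j. w \<notin> H \<and> w \<otimes> inv y \<notin> H)"

lemma three_cong: "even j = even j' \<Longrightarrow> three j = three j'"
  unfolding three_def by simp

end

locale amalgN = amalg +
  assumes nd: "nondegenerate G G0 G1 H"
begin

lemma ex_ty: "\<exists>w\<in>ty j. w \<notin> H"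
proof -
  have "(infinite (cosets_in G G0 H) \<or> card (cosets_in G G0 H) \<ge> 2) \<and>
        (infinite (cosets_in G G1 H) \<or> card (cosets_in G G1 H) \<ge> 2)"
    using nd unfolding nondegenerate_def Let_def by blast
  then show ?thesis using ex2_gen[OF sg0 H0] ex2_gen[OF sg1 H1] by (cases "even j") auto
qed

lemma three_some: "three 0 \<or> three 1"
proof -
  let ?R0 = "cosets_in G G0 H" and ?R1 = "cosets_in G G1 H"
  have n: "(infinite ?R0 \<or> card ?R0 \<ge> 2) \<and> (infinite ?R1 \<or> card ?R1 \<ge> 2) \<and>
       (infinite ?R0 \<or> infinite ?R1 \<or> (card ?R0 - 1) * (card ?R1 - 1) \<ge> 2)"
    using nd unfolding nondegenerate_def Let_def by blast
  have "(infinite ?R0 \<or> card ?R0 \<ge> 3) \<or> (infinite ?R1 \<or> card ?R1 \<ge> 3)"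
  proof (rule ccontr)
    assume "\<not> ?thesis"
    then have "card ?R0 = 2" "card ?R1 = 2" "finite ?R0" "finite ?R1" using n by auto
    then show False using n by simp
  qed
  then show ?thesis unfolding three_def using three_gen[OF sg0 H0] three_gen[OF sg1 H1] by auto
qed


definition Kc :: bool where
  "Kc \<longleftrightarrow> (\<forall>y\<in>H. y \<noteq> \<one> \<longrightarrow> (\<forall>d. \<exists>vs. alt d vs \<and> cj (wp vs) y \<notin> H))"

definition Reach :: "'a \<Rightarrow> nat \<Rightarrow> bool" where
  "Reach x d \<longleftrightarrow> (\<exists>vs. alt d vs \<and> good (cj (wp vs) x) (d + length vs))"

lemma reach_good: "good x d \<Longrightarrow> Reach x d"
  unfolding Reach_def
  by (rule exI[of _ "[]"]) (simp add: cj_def good_carrier)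

lemma reach_step: assumes v: "v \<in> ty d - H" and x: "x \<in> carrier G" and r: "Reach (cj v x) (Suc d)"
  shows "Reach x d"
proof -
  obtain vs where vs: "alt (Suc d) vs" "good (cj (wp vs) (cj v x)) (Suc d + length vs)"
    using r unfolding Reach_def by blast
  have vc: "v \<in> carrier G" using v typ_carrier by blast
  have "alt d (v # vs)" using v vs by (simp add: alt_Cons)
  moreover have "cj (wp (v # vs)) x = cj (wp vs) (cj v x)" using vc x alt_set[OF vs(1)] by (simp add: cj_mult)
  ultimately show ?thesis using vs(2) unfolding Reach_def by (intro exI[of _ "v # vs"]) simp
qed

lemma reach_H: "Kc \<Longrightarrow> y \<in> H \<Longrightarrow> y \<noteq> \<one> \<Longrightarrow> Reach y d"
  unfolding Kc_def Reach_def using good_H by blast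

definition caseA :: "nat \<Rightarrow> 'a \<Rightarrow> bool" where
  "caseA d x \<longleftrightarrow> (\<exists>xs. alt (Suc d) xs \<and> even (length xs) \<and> xs \<noteq> [] \<and> x = wp xs)"
definition caseB :: "nat \<Rightarrow> 'a \<Rightarrow> bool" where
  "caseB d x \<longleftrightarrow> (\<exists>xs. alt d xs \<and> even (length xs) \<and> xs \<noteq> [] \<and> x = wp xs)"

lemma ty_mult: "a \<in> ty j \<Longrightarrow> b \<in> ty j \<Longrightarrow> a \<otimes> b \<in> ty j"
  using subgroup.m_closed[OF sgt] by blast
lemma ty_inv: "a \<in> ty j \<Longrightarrow> inv a \<in> ty j"
  using subgroup.m_inv_closed[OF sgt] by blast
lemma tyc: "a \<in> ty j \<Longrightarrow> a \<in> carrier G"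
  using typ_carrier by blast

lemma stepA_gen:
  assumes xs: "alt (Suc d) (ys @ [z])" "even (length (ys @ [z]))" and v: "v \<in> ty d - H"
  shows "z \<otimes> v \<notin> H \<Longrightarrow> good (cj v (wp (ys @ [z]))) (Suc d)"
    and "z \<otimes> v \<in> H \<Longrightarrow> caseA (Suc d) (cj v (wp (ys @ [z])))"
proof -
  have ys: "alt (Suc d) ys" and z0: "z \<in> ty (Suc d + length ys) - H" using xs(1) by (auto simp: alt_append alt_single)
  have oy: "odd (length ys)" using xs(2) by simp
  have "even (Suc d + length ys) = even d" using oy by simp
  then have z: "z \<in> ty d - H" using z0 by simp
  have vc: "v \<in> carrier G" and zc: "z \<in> carrier G" and ysc: "set ys \<subseteq> carrier G"
    using v z tyc alt_set[OF ys] by auto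
  have iv: "inv v \<in> ty (Suc (Suc d)) - H" using inv_ty[OF v] by simp
  have ys3: "alt (Suc (Suc (Suc d))) ys" using ys alt_cong[of "Suc (Suc (Suc d))" "Suc d"] by simp
  have zv: "z \<otimes> v \<in> ty d" using ty_mult z v by blast
  show "good (cj v (wp (ys @ [z]))) (Suc d)" if nH: "z \<otimes> v \<notin> H"
  proof -
    have "even (Suc (Suc (Suc d)) + length ys) = even d" using oy by simp
    then have "z \<otimes> v \<in> ty (Suc (Suc (Suc d)) + length ys) - H" using zv nH by simp
    then have "alt (Suc (Suc d)) (inv v # ys @ [z \<otimes> v])" using iv ys3
      by (simp add: alt_Cons alt_append alt_single)
    moreover have "odd (length (inv v # ys @ [z \<otimes> v]))" using oy by simp
    moreover have "cj v (wp (ys @ [z])) = wp (inv v # ys @ [z \<otimes> v])"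
      using vc zc ysc unfolding cj_def by (simp add: wp_append m_assoc)
    ultimately show ?thesis unfolding good_def by blast
  qed
  show "caseA (Suc d) (cj v (wp (ys @ [z])))" if hH: "z \<otimes> v \<in> H"
  proof -
    obtain ws u where wu: "ys = ws @ [u]" using oy by (cases ys rule: rev_exhaust) auto
    have ws: "alt (Suc d) ws" and u0: "u \<in> ty (Suc d + length ws) - H" using ys wu by (auto simp: alt_append alt_single)
    have ew: "even (length ws)" using oy wu by simp
    have uc: "u \<in> carrier G" using u0 typ_carrier[of "Suc d + length ws"] by blast
    have wsc: "set ws \<subseteq> carrier G" using alt_set[OF ws] .
    have "even (Suc d + length ws) = even (Suc d)" using ew by simp
    then have u: "u \<in> ty (Suc d) - H" using u0 by simp
    have uh: "u \<otimes> (z \<otimes> v) \<in> ty (Suc d) - H" using mulH[OF hH u] .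
    have "even (Suc (Suc (Suc d)) + length ws) = even (Suc d)" using ew by simp
    then have uh': "u \<otimes> (z \<otimes> v) \<in> ty (Suc (Suc (Suc d)) + length ws) - H" using uh by simp
    have ws3: "alt (Suc (Suc (Suc d))) ws" using ws alt_cong[of "Suc (Suc (Suc d))" "Suc d"] by simp
    have "alt (Suc (Suc d)) (inv v # ws @ [u \<otimes> (z \<otimes> v)])" using iv ws3 uh'
      by (simp add: alt_Cons alt_append alt_single)
    moreover have "even (length (inv v # ws @ [u \<otimes> (z \<otimes> v)]))" using ew by simp
    moreover have "cj v (wp (ys @ [z])) = wp (inv v # ws @ [u \<otimes> (z \<otimes> v)])"
      using vc zc uc wsc wu unfolding cj_def by (simp add: wp_append m_assoc)
    ultimately show ?thesis unfolding caseA_def by blast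
  qed
qed

lemma caseA_dest: "caseA d x \<Longrightarrow> \<exists>ys z. alt (Suc d) (ys @ [z]) \<and> even (length (ys @ [z])) \<and> x = wp (ys @ [z])"
  unfolding caseA_def by (metis rev_exhaust)

lemma stepA_any: "caseA d x \<Longrightarrow> v \<in> ty d - H \<Longrightarrow> good (cj v x) (Suc d) \<or> caseA (Suc d) (cj v x)"
  using caseA_dest stepA_gen by metis

lemma stepA3: assumes "caseA d x" "three d" shows "\<exists>v\<in>ty d - H. good (cj v x) (Suc d)"
proof -
  obtain ys z where yz: "alt (Suc d) (ys @ [z])" "even (length (ys @ [z]))" "x = wp (ys @ [z])"
    using caseA_dest[OF assms(1)] by blast
  have ys: "alt (Suc d) ys" and z0: "z \<in> ty (Suc d + length ys) - H" using yz(1) by (auto simp: alt_append alt_single)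
  have "even (Suc d + length ys) = even d" using yz(2) by simp
  then have z: "z \<in> ty d" using z0 by simp
  obtain w where w: "w \<in> ty d" "w \<notin> H" "w \<otimes> inv z \<notin> H" using assms(2) z unfolding three_def by blast
  have wc: "w \<in> carrier G" and zc: "z \<in> carrier G" using w z tyc by auto
  have v: "inv w \<in> ty d - H" using inv_ty w by blast
  have "z \<otimes> inv w = inv (w \<otimes> inv z)" using wc zc by (simp add: inv_mult_group)
  then have "z \<otimes> inv w \<notin> H"
    using w(3) subgroup.m_inv_closed[OF sgH] wc zc by (metis inv_closed inv_inv m_closed)
  then show ?thesis using stepA_gen(1)[OF yz(1,2) v] yz(3) v by blast
qed


lemma stepB_gen:
  assumes xs: "alt d (z # ys)" "even (length (z # ys))" and v: "v \<in> ty d - H"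
  shows "inv v \<otimes> z \<notin> H \<Longrightarrow> good (cj v (wp (z # ys))) (Suc d)"
    and "inv v \<otimes> z \<in> H \<Longrightarrow> caseB (Suc d) (cj v (wp (z # ys)))"
proof -
  have ys: "alt (Suc d) ys" and z: "z \<in> ty d - H" using xs(1) by (auto simp: alt_Cons)
  have oy: "odd (length ys)" using xs(2) by simp
  have vc: "v \<in> carrier G" and zc: "z \<in> carrier G" and ysc: "set ys \<subseteq> carrier G"
    using v z tyc alt_set[OF ys] by auto
  have ivz: "inv v \<otimes> z \<in> ty d" using ty_mult ty_inv z v by blast
  show "good (cj v (wp (z # ys))) (Suc d)" if nH: "inv v \<otimes> z \<notin> H"
  proof -
    have ys3: "alt (Suc (Suc (Suc d))) ys" using ys alt_cong[of "Suc (Suc (Suc d))" "Suc d"] by simp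
    have "even (Suc (Suc (Suc d)) + length ys) = even d" using oy by simp
    then have "v \<in> ty (Suc (Suc (Suc d)) + length ys) - H" using v by simp
    then have "alt (Suc (Suc d)) ((inv v \<otimes> z) # ys @ [v])" using ivz nH ys3
      by (simp add: alt_Cons alt_append alt_single)
    moreover have "odd (length ((inv v \<otimes> z) # ys @ [v]))" using oy by simp
    moreover have "cj v (wp (z # ys)) = wp ((inv v \<otimes> z) # ys @ [v])"
      using vc zc ysc unfolding cj_def by (simp add: wp_append m_assoc)
    ultimately show ?thesis unfolding good_def by blast
  qed
  show "caseB (Suc d) (cj v (wp (z # ys)))" if hH: "inv v \<otimes> z \<in> H"
  proof -
    obtain u ws where wu: "ys = u # ws" using oy by (cases ys) auto
    have ws: "alt (Suc (Suc d)) ws" and u: "u \<in> ty (Suc d) - H" using ys wu by (auto simp: alt_Cons)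
    have ew: "even (length ws)" using oy wu by simp
    have uc: "u \<in> carrier G" using u typ_carrier[of "Suc d"] by blast
    have wsc: "set ws \<subseteq> carrier G" using alt_set[OF ws] .
    have hu: "(inv v \<otimes> z) \<otimes> u \<in> ty (Suc d) - H" using Hmul[OF hH u] .
    have "even (Suc (Suc d) + length ws) = even d" using ew by simp
    then have "v \<in> ty (Suc (Suc d) + length ws) - H" using v by simp
    then have "alt (Suc d) (((inv v \<otimes> z) \<otimes> u) # ws @ [v])" using hu ws
      by (simp add: alt_Cons alt_append alt_single)
    moreover have "even (length (((inv v \<otimes> z) \<otimes> u) # ws @ [v]))" using ew by simp
    moreover have "cj v (wp (z # ys)) = wp (((inv v \<otimes> z) \<otimes> u) # ws @ [v])"
      using vc zc uc wsc wu unfolding cj_def by (simp add: wp_append m_assoc)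
    ultimately show ?thesis unfolding caseB_def by blast
  qed
qed

lemma caseB_dest: "caseB d x \<Longrightarrow> \<exists>z ys. alt d (z # ys) \<and> even (length (z # ys)) \<and> x = wp (z # ys)"
  unfolding caseB_def by (metis list.exhaust)

lemma stepB_any: "caseB d x \<Longrightarrow> v \<in> ty d - H \<Longrightarrow> good (cj v x) (Suc d) \<or> caseB (Suc d) (cj v x)"
  using caseB_dest stepB_gen by metis

lemma stepB3: assumes "caseB d x" "three d" shows "\<exists>v\<in>ty d - H. good (cj v x) (Suc d)"
proof -
  obtain z ys where yz: "alt d (z # ys)" "even (length (z # ys))" "x = wp (z # ys)"
    using caseB_dest[OF assms(1)] by blast
  have z: "z \<in> ty d" using yz(1) by (auto simp: alt_Cons)
  have zc: "z \<in> carrier G" using z tyc by auto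
  obtain w where w: "w \<in> ty d" "w \<notin> H" "w \<otimes> inv (inv z) \<notin> H" using assms(2) ty_inv[OF z] unfolding three_def by blast
  have wc: "w \<in> carrier G" using w tyc by auto
  have v: "inv w \<in> ty d - H" using inv_ty w by blast
  have "inv (inv w) \<otimes> z \<notin> H" using w(3) wc zc by simp
  then show ?thesis using stepB_gen(1)[OF yz(1,2) v] yz(3) v by blast
qed

lemma caseA_carrier: "caseA d x \<Longrightarrow> x \<in> carrier G"
  unfolding caseA_def using alt_set wp_carrier by blast
lemma caseB_carrier: "caseB d x \<Longrightarrow> x \<in> carrier G"
  unfolding caseB_def using alt_set wp_carrier by blast

lemma reachA: "caseA d x \<Longrightarrow> Reach x d"
proof -
  assume a: "caseA d x"
  have xc: "x \<in> carrier G" using caseA_carrier[OF a] .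
  show ?thesis
  proof (cases "three d")
    case True
    then obtain v where "v \<in> ty d - H" "good (cj v x) (Suc d)" using stepA3 a by blast
    then show ?thesis using reach_step[OF _ xc] reach_good by blast
  next
    case False
    then have t: "three (Suc d)" using three_some three_cong[of d 0] three_cong[of "Suc d" 0] three_cong[of d 1] three_cong[of "Suc d" 1]
      by (cases "even d") auto
    obtain v where v: "v \<in> ty d - H" using ex_ty by blast
    have vc: "v \<in> carrier G" using v tyc by blast
    consider "good (cj v x) (Suc d)" | "caseA (Suc d) (cj v x)" using stepA_any[OF a v] by blast
    then show ?thesis
    proof cases
      case 1 then show ?thesis using reach_step[OF v xc] reach_good by blast
    next
      case 2
      then obtain v' where v': "v' \<in> ty (Suc d) - H" "good (cj v' (cj v x)) (Suc (Suc d))" using stepA3 t by blast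
      then have "Reach (cj v x) (Suc d)" using reach_step[OF v'(1)] reach_good vc xc by simp
      then show ?thesis using reach_step[OF v xc] by blast
    qed
  qed
qed

lemma reachB: "caseB d x \<Longrightarrow> Reach x d"
proof -
  assume a: "caseB d x"
  have xc: "x \<in> carrier G" using caseB_carrier[OF a] .
  show ?thesis
  proof (cases "three d")
    case True
    then obtain v where "v \<in> ty d - H" "good (cj v x) (Suc d)" using stepB3 a by blast
    then show ?thesis using reach_step[OF _ xc] reach_good by blast
  next
    case False
    then have t: "three (Suc d)" using three_some three_cong[of d 0] three_cong[of "Suc d" 0] three_cong[of d 1] three_cong[of "Suc d" 1]
      by (cases "even d") auto
    obtain v where v: "v \<in> ty d - H" using ex_ty by blast
    have vc: "v \<in> carrier G" using v tyc by blast
    consider "good (cj v x) (Suc d)" | "caseB (Suc d) (cj v x)" using stepB_any[OF a v] by blast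
    then show ?thesis
    proof cases
      case 1 then show ?thesis using reach_step[OF v xc] reach_good by blast
    next
      case 2
      then obtain v' where v': "v' \<in> ty (Suc d) - H" "good (cj v' (cj v x)) (Suc (Suc d))" using stepB3 t by blast
      then have "Reach (cj v x) (Suc d)" using reach_step[OF v'(1)] reach_good vc xc by simp
      then show ?thesis using reach_step[OF v xc] by blast
    qed
  qed
qed


lemma reachC: "alt d xs \<Longrightarrow> odd (length xs) \<Longrightarrow> Reach (wp xs) d"
proof (induction "length xs" arbitrary: xs d rule: less_induct)
  case less
  obtain z0 rest where zr: "xs = z0 # rest" using less.prems(2) by (cases xs) auto
  have z0: "z0 \<in> ty d - H" and rest: "alt (Suc d) rest" using less.prems(1) zr by (auto simp: alt_Cons)
  have z0c: "z0 \<in> carrier G" using z0 tyc by blast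
  show ?case
  proof (cases rest)
    case Nil
    have "cj z0 z0 = z0" using z0c unfolding cj_def by simp
    moreover have "good z0 (Suc d)" unfolding good_def using z0 z0c
      by (intro exI[of _ "[z0]"]) (simp add: alt_single)
    ultimately have "Reach (cj z0 (wp xs)) (Suc d)" using reach_good zr Nil z0c by simp
    then show ?thesis using reach_step[OF z0] zr Nil z0c by simp
  next
    case (Cons r rs)
    obtain ms z1 where mz: "rest = ms @ [z1]" using Cons by (metis list.distinct(1) rev_exhaust)
    have ms: "alt (Suc d) ms" and z1': "z1 \<in> ty (Suc d + length ms) - H" using rest mz by (auto simp: alt_append alt_single)
    have om: "odd (length ms)" using less.prems(2) zr mz by simp
    have "even (Suc d + length ms) = even d" using om by simp
    then have z1: "z1 \<in> ty d - H" using z1' by simp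
    have z1c: "z1 \<in> carrier G" using z1 tyc by blast
    have msc: "set ms \<subseteq> carrier G" using alt_set[OF ms] .
    have xc: "wp xs \<in> carrier G" using alt_set[OF less.prems(1)] by simp
    have v: "inv z1 \<in> ty d - H" using inv_ty[OF z1] .
    have e: "cj (inv z1) (wp xs) = (z1 \<otimes> z0) \<otimes> wp ms"
      using zr mz z0c z1c msc unfolding cj_def by (simp add: wp_append m_assoc)
    have w: "z1 \<otimes> z0 \<in> ty d" using ty_mult z0 z1 by blast
    have "Reach (cj (inv z1) (wp xs)) (Suc d)"
    proof (cases "z1 \<otimes> z0 \<in> H")
      case False
      have "alt (Suc (Suc d)) ((z1 \<otimes> z0) # ms)" using w False ms alt_cong[of "Suc (Suc (Suc d))" "Suc d"]
        by (simp add: alt_Cons)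
      moreover have "even (length ((z1 \<otimes> z0) # ms))" using om by simp
      ultimately have "caseA (Suc d) (wp ((z1 \<otimes> z0) # ms))" unfolding caseA_def by blast
      then show ?thesis using reachA e by simp
    next
      case True
      obtain m0 ms' where mm: "ms = m0 # ms'" using om by (cases ms) auto
      have m0: "m0 \<in> ty (Suc d) - H" and ms': "alt (Suc (Suc d)) ms'" using ms mm by (auto simp: alt_Cons)
      have m0c: "m0 \<in> carrier G" using m0 typ_carrier[of "Suc d"] by blast
      have "alt (Suc d) (((z1 \<otimes> z0) \<otimes> m0) # ms')" using Hmul[OF True m0] ms' by (simp add: alt_Cons)
      moreover have "odd (length (((z1 \<otimes> z0) \<otimes> m0) # ms'))" using om mm by simp
      moreover have "length (((z1 \<otimes> z0) \<otimes> m0) # ms') < length xs" using zr mz mm by simp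
      ultimately have "Reach (wp (((z1 \<otimes> z0) \<otimes> m0) # ms')) (Suc d)" using less.hyps by blast
      moreover have "wp (((z1 \<otimes> z0) \<otimes> m0) # ms') = (z1 \<otimes> z0) \<otimes> wp ms"
        using mm z0c z1c m0c alt_set[OF ms'] by (simp add: m_assoc)
      ultimately show ?thesis using e by simp
    qed
    then show ?thesis using reach_step[OF v xc] by blast
  qed
qed

lemma reach_all: assumes K: Kc and x: "x \<in> carrier G" "x \<noteq> \<one>" shows "Reach x d"
proof (cases "x \<in> H")
  case True then show ?thesis using reach_H K x by blast
next
  case False
  then obtain xs p where xs: "xs \<noteq> []" "alt p xs" "x = wp xs" using nf3[OF x(1)] by blast
  show ?thesis
  proof (cases "even p = even d")
    case True
    then have a: "alt d xs" using alt_cong xs(2) by blast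
    show ?thesis
    proof (cases "even (length xs)")
      case True then show ?thesis using reachB a xs unfolding caseB_def by blast
    next
      case False then show ?thesis using reachC a xs by blast
    qed
  next
    case False
    then have "even p = even (Suc d)" by simp
    then have a: "alt (Suc d) xs" using alt_cong xs(2) by blast
    show ?thesis
    proof (cases "even (length xs)")
      case True then show ?thesis using reachA a xs unfolding caseA_def by blast
    next
      case False
      then have "good x d" unfolding good_def using a xs by blast
      then show ?thesis by (rule reach_good)
    qed
  qed
qed

lemma common: assumes K: Kc shows "finite F \<Longrightarrow> F \<subseteq> carrier G - {\<one>} \<Longrightarrow>
   \<exists>ws. alt 0 ws \<and> (\<forall>f\<in>F. good (cj (wp ws) f) (length ws))"
proof (induction F rule: finite_induct)
  case empty then show ?case by (intro exI[of _ "[]"]) simp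
next
  case (insert f F)
  then obtain ws where ws: "alt 0 ws" "\<forall>f\<in>F. good (cj (wp ws) f) (length ws)" by blast
  have wsc: "set ws \<subseteq> carrier G" using alt_set[OF ws(1)] .
  have fc: "f \<in> carrier G" "f \<noteq> \<one>" using insert by auto
  have "cj (wp ws) f \<in> carrier G" "cj (wp ws) f \<noteq> \<one>" using fc wsc cj_one by auto
  then obtain vs where vs: "alt (length ws) vs" "good (cj (wp vs) (cj (wp ws) f)) (length ws + length vs)"
    using reach_all[OF K] unfolding Reach_def by blast
  have vsc: "set vs \<subseteq> carrier G" using alt_set[OF vs(1)] .
  have "alt 0 (ws @ vs)" using ws(1) vs(1) by (simp add: alt_append)
  moreover have "good (cj (wp (ws @ vs)) f) (length (ws @ vs))"
    using vs(2) cj_wp_append[OF wsc vsc fc(1)] by simp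
  moreover have "\<forall>g\<in>F. good (cj (wp (ws @ vs)) g) (length (ws @ vs))"
  proof
    fix g assume g: "g \<in> F"
    then have gc: "g \<in> carrier G" using insert by auto
    have "good (cj (wp vs) (cj (wp ws) g)) (length ws + length vs)" using good_ext[OF _ vs(1)] ws(2) g by blast
    then show "good (cj (wp (ws @ vs)) g) (length (ws @ vs))" using cj_wp_append[OF wsc vsc gc] by simp
  qed
  ultimately show ?case by blast
qed


lemma conj_mem: "t \<in> carrier G \<Longrightarrow> y \<in> carrier G \<Longrightarrow> y \<in> conj_set G t H \<longleftrightarrow> cj t y \<in> H"
proof
  assume a: "t \<in> carrier G" "y \<in> carrier G" "y \<in> conj_set G t H"
  then obtain h where h: "h \<in> H" "y = t \<otimes> h \<otimes> inv t" unfolding conj_set_def by blast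
  have hc: "h \<in> carrier G" using h H_carrier by blast
  have "cj t y = h" using h(2) a hc unfolding cj_def by (simp add: m_assoc) (simp add: m_assoc[symmetric])
  then show "cj t y \<in> H" using h by simp
next
  assume a: "t \<in> carrier G" "y \<in> carrier G" "cj t y \<in> H"
  have "y = t \<otimes> cj t y \<otimes> inv t" using cj_inv[OF a(1,2)] .
  then show "y \<in> conj_set G t H" unfolding conj_set_def using a(3) by blast
qed

lemma T_set_carrier: "t \<in> T_set G G0 G1 H j k \<Longrightarrow> t \<in> carrier G"
  unfolding T_set_def using H_carrier alt_set by (auto split: if_splits)

lemma K_mem: "y \<in> K_set G G0 G1 H j \<longleftrightarrow> (\<forall>k. \<forall>t\<in>T_set G G0 G1 H j k. y \<in> conj_set G t H)"
  unfolding K_set_def C_set_def by blast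

lemma one_K: "\<one> \<in> K_set G G0 G1 H j"
  unfolding K_mem
proof (intro allI ballI)
  fix k t assume "t \<in> T_set G G0 G1 H j k"
  then have tc: "t \<in> carrier G" by (rule T_set_carrier)
  have "cj t \<one> = \<one>" using tc unfolding cj_def by simp
  then show "\<one> \<in> conj_set G t H" using conj_mem[OF tc] subgroup.one_closed[OF sgH] by simp
qed

lemma T_set_wp: "alt j xs \<Longrightarrow> xs \<noteq> [] \<Longrightarrow> wp xs \<in> T_set G G0 G1 H j (length xs)"
  unfolding T_set_def by auto

lemma T_set_H: "h \<in> H \<Longrightarrow> h \<in> T_set G G0 G1 H j 0"
  unfolding T_set_def by auto

lemma K_Kc: assumes "K_set G G0 G1 H 0 = {\<one>}" "K_set G G0 G1 H 1 = {\<one>}" shows Kc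
  unfolding Kc_def
proof (intro ballI impI allI)
  fix y and d :: nat assume y: "y \<in> H" "y \<noteq> \<one>"
  have yc: "y \<in> carrier G" using y H_carrier by blast
  have e: "even (d mod 2) = even d" by presburger
  have "K_set G G0 G1 H (d mod 2) = {\<one>}" using assms by (cases "even d") (auto simp: even_iff_mod_2_eq_zero odd_iff_mod_2_eq_one)
  then have "y \<notin> K_set G G0 G1 H (d mod 2)" using y by simp
  then obtain k t where kt: "t \<in> T_set G G0 G1 H (d mod 2) k" "y \<notin> conj_set G t H" unfolding K_mem by blast
  have tc: "t \<in> carrier G" using T_set_carrier[OF kt(1)] .
  have nH: "cj t y \<notin> H" using conj_mem[OF tc yc] kt(2) by simp
  show "\<exists>vs. alt d vs \<and> cj (wp vs) y \<notin> H"
  proof (cases "k = 0")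
    case True
    then have "t \<in> H" using kt(1) unfolding T_set_def by simp
    then have "cj t y \<in> H" unfolding cj_def using y
      by (meson subgroup.m_closed subgroup.m_inv_closed sgH)
    then show ?thesis using nH by simp
  next
    case False
    then obtain xs where "t = wp xs" "alt (d mod 2) xs" using kt(1) unfolding T_set_def by auto
    then show ?thesis using nH alt_cong[OF e] by blast
  qed
qed

lemma iii_K: assumes iii: "\<forall>F. finite F \<and> F \<subseteq> H - {\<one>} \<longrightarrow> (\<exists>g\<in>carrier G. conj_set G g F \<inter> H = {})"
  shows "K_set G G0 G1 H j = {\<one>}"
proof -
  have "x = \<one>" if x: "x \<in> K_set G G0 G1 H j" for x
  proof (rule ccontr)
    assume x1: "x \<noteq> \<one>"
    have "x \<in> conj_set G \<one> H" using x T_set_H[OF subgroup.one_closed[OF sgH]] unfolding K_mem by blast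
    then have xH: "x \<in> H" unfolding conj_set_def using H_carrier by auto
    have xc: "x \<in> carrier G" using xH H_carrier by blast
    obtain a where a: "a \<in> ty j" "a \<notin> H" using ex_ty by blast
    have ac: "a \<in> carrier G" using a tyc by blast
    have "alt j [a]" using a by (simp add: alt_single)
    then have "a \<in> T_set G G0 G1 H j 1" using T_set_wp[of j "[a]"] ac by simp
    then have "x \<in> conj_set G a H" using x unfolding K_mem by blast
    then have yH: "cj a x \<in> H" using conj_mem[OF ac xc] by simp
    have y1: "cj a x \<noteq> \<one>" using cj_one[OF ac xc] x1 by simp
    have "finite {x, cj a x} \<and> {x, cj a x} \<subseteq> H - {\<one>}" using xH yH x1 y1 by auto
    then obtain g where g: "g \<in> carrier G" "conj_set G g {x, cj a x} \<inter> H = {}" using iii by blast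
    define s where "s = inv g"
    have sc: "s \<in> carrier G" using g s_def by simp
    have cjs: "cj s z = g \<otimes> z \<otimes> inv g" for z unfolding cj_def s_def using g by simp
    have n1: "cj s x \<notin> H" using g(2) cjs unfolding conj_set_def by blast
    have n2: "cj s (cj a x) \<notin> H" using g(2) cjs unfolding conj_set_def by blast
    consider "s \<in> H" | xs where "xs \<noteq> []" "alt j xs" "s = wp xs" | xs where "xs \<noteq> []" "alt (Suc j) xs" "s = wp xs"
      using nf3[OF sc] alt_cong[of 0 j] alt_cong[of 1 j] alt_cong[of 0 "Suc j"] alt_cong[of 1 "Suc j"]
      by (cases "even j") auto
    then show False
    proof cases
      case 1
      then have "s \<in> T_set G G0 G1 H j 0" by (rule T_set_H)
      then show False using x n1 conj_mem[OF sc xc] unfolding K_mem by blast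
    next
      case 2
      then have "s \<in> T_set G G0 G1 H j (length xs)" using T_set_wp by simp
      then show False using x n1 conj_mem[OF sc xc] unfolding K_mem by blast
    next
      case 3
      have "alt j (a # xs)" using 3 a by (simp add: alt_Cons)
      then have "wp (a # xs) \<in> T_set G G0 G1 H j (length (a # xs))" using T_set_wp by blast
      then have "cj (a \<otimes> s) x \<in> H" using x conj_mem[of "a \<otimes> s" x] sc ac xc 3 unfolding K_mem by auto
      then show False using n2 cj_mult[OF ac sc xc] by simp
    qed
  qed
  then show ?thesis using one_K by blast
qed

lemma Kc_ii: assumes K: Kc and F: "finite F" "F \<subseteq> carrier G - {\<one>}"
  shows "\<exists>g\<in>carrier G. conj_set G g F \<inter> H = {}"
proof -
  obtain ws where ws: "alt 0 ws" "\<forall>f\<in>F. good (cj (wp ws) f) (length ws)" using common[OF K F] by blast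
  have wc: "wp ws \<in> carrier G" using alt_set[OF ws(1)] by simp
  have "conj_set G (inv (wp ws)) F \<inter> H = {}"
  proof -
    have "inv (wp ws) \<otimes> f \<otimes> inv (inv (wp ws)) \<notin> H" if "f \<in> F" for f
    proof -
      have "cj (wp ws) f \<notin> H" using good_notH ws(2) that by blast
      then show ?thesis using wc unfolding cj_def by simp
    qed
    then show ?thesis unfolding conj_set_def by blast
  qed
  then show ?thesis using wc by blast
qed


lemma invc1[simp]: "x \<in> carrier G \<Longrightarrow> y \<in> carrier G \<Longrightarrow> inv x \<otimes> (x \<otimes> y) = y"
  by (simp add: m_assoc[symmetric])
lemma invc2[simp]: "x \<in> carrier G \<Longrightarrow> y \<in> carrier G \<Longrightarrow> x \<otimes> (inv x \<otimes> y) = y"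
  by (simp add: m_assoc[symmetric])

lemma cj_comm: "W \<in> carrier G \<Longrightarrow> f \<in> carrier G \<Longrightarrow> y \<in> carrier G \<Longrightarrow> W \<otimes> (cj W f \<otimes> y) = f \<otimes> (W \<otimes> y)"
proof -
  assume c: "W \<in> carrier G" "f \<in> carrier G" "y \<in> carrier G"
  have "cj W f \<otimes> y = inv W \<otimes> (f \<otimes> (W \<otimes> y))" unfolding cj_def using c by (simp add: m_assoc)
  then show ?thesis using c by (simp add: m_assoc[symmetric])
qed

lemma lcos_mem: "x \<in> a <# M \<longleftrightarrow> (\<exists>m\<in>M. x = a \<otimes> m)"
  unfolding l_coset_def by auto

lemma Tset_Suc2: "Tset (Suc (Suc d)) = Tset d"
  by (rule Tset_cong) simp

lemma Hset_disj: "y \<in> H \<union> Tset d \<Longrightarrow> y \<notin> Tset (Suc d)"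
  using Tset_H Tset_disj by blast

lemma good_pos3: assumes K: Kc and F: "finite F" "F \<subseteq> carrier G - {\<one>}"
  shows "\<exists>ws. alt 0 ws \<and> three (length ws) \<and> (\<forall>f\<in>F. good (cj (wp ws) f) (length ws))"
proof -
  obtain ws where ws: "alt 0 ws" "\<forall>f\<in>F. good (cj (wp ws) f) (length ws)" using common[OF K F] by blast
  show ?thesis
  proof (cases "three (length ws)")
    case True then show ?thesis using ws by blast
  next
    case False
    then have t: "three (Suc (length ws))" using three_some three_cong[of "length ws" 0] three_cong[of "Suc (length ws)" 0]
        three_cong[of "length ws" 1] three_cong[of "Suc (length ws)" 1]
      by (cases "even (length ws)") auto
    obtain a where a: "a \<in> ty (length ws)" "a \<notin> H" using ex_ty by blast
    have ac: "a \<in> carrier G" using a tyc by blast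
    have aa: "alt (length ws) [a]" using a by (simp add: alt_single)
    have "alt 0 (ws @ [a])" using ws(1) aa by (simp add: alt_append)
    moreover have "\<forall>f\<in>F. good (cj (wp (ws @ [a])) f) (length (ws @ [a]))"
    proof
      fix f assume f: "f \<in> F"
      have fc: "f \<in> carrier G" using f F by auto
      have "good (cj (wp [a]) (cj (wp ws) f)) (length ws + length [a])" using good_ext[OF _ aa] ws(2) f by blast
      then show "good (cj (wp (ws @ [a])) f) (length (ws @ [a]))"
        using cj_wp_append[OF alt_set[OF ws(1)] _ fc, of "[a]"] ac by simp
    qed
    ultimately show ?thesis using t by (intro exI[of _ "ws @ [a]"]) simp
  qed
qed

lemma Kword: fixes m :: nat assumes a: "a \<in> ty (Suc d) - H" and c: "c \<in> ty d - H" and c': "c' \<in> ty d"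
  and cc: "inv c \<otimes> c' \<notin> H"
  shows "m \<ge> 1 \<Longrightarrow> \<exists>K. alt (Suc d) K \<and> even (length K) \<and> wp K = inv ((c \<otimes> a) [^] m) \<otimes> c'"
proof (induction m)
  case 0 then show ?case by simp
next
  case (Suc m)
  have ac: "a \<in> carrier G" using a typ_carrier[of "Suc d"] by blast
  have cc1: "c \<in> carrier G" "c' \<in> carrier G" using c c' tyc by auto
  have ia: "inv a \<in> ty (Suc d) - H" using inv_ty[OF a] .
  have ic: "inv c \<in> ty (Suc (Suc d)) - H" using inv_ty[OF c] by simp
  show ?case
  proof (cases "m = 0")
    case True
    have "inv c \<otimes> c' \<in> ty (Suc (Suc d)) - H" using ty_mult[OF ty_inv c'] c cc by simp
    then have "alt (Suc d) [inv a, inv c \<otimes> c']" using ia by (simp add: alt_Cons)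
    moreover have "wp [inv a, inv c \<otimes> c'] = inv ((c \<otimes> a) [^] Suc m) \<otimes> c'"
      using True ac cc1 by (simp add: inv_mult_group m_assoc)
    ultimately show ?thesis by (intro exI[of _ "[inv a, inv c \<otimes> c']"]) simp
  next
    case False
    then obtain K where K: "alt (Suc d) K" "even (length K)" "wp K = inv ((c \<otimes> a) [^] m) \<otimes> c'"
      using Suc by auto
    have "alt (Suc d) (inv a # inv c # K)" using ia ic K(1) alt_cong[of "Suc (Suc (Suc d))" "Suc d"]
      by (simp add: alt_Cons)
    moreover have "even (length (inv a # inv c # K))" using K(2) by simp
    moreover have "wp (inv a # inv c # K) = inv ((c \<otimes> a) [^] Suc m) \<otimes> c'"
    proof -
      have pc: "(c \<otimes> a) [^] m \<in> carrier G" using ac cc1 by simp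
      have "inv ((c \<otimes> a) [^] Suc m) = inv (c \<otimes> a) \<otimes> inv ((c \<otimes> a) [^] m)"
        using pc ac cc1 by (simp add: inv_mult_group)
      then show ?thesis using K(3) ac cc1 pc by (simp add: inv_mult_group m_assoc)
    qed
    ultimately show ?thesis by blast
  qed
qed

lemma powers: assumes K: Kc shows "powers_group G"
  unfolding powers_group_def
proof (intro allI impI)
  fix F and k :: nat
  assume Fk: "finite F \<and> F \<subseteq> carrier G - {\<one>} \<and> 1 \<le> k"
  then obtain ws where ws: "alt 0 ws" "three (length ws)" "\<forall>f\<in>F. good (cj (wp ws) f) (length ws)"
    using good_pos3[OF K] by blast
  define d where "d = length ws"
  define W where "W = wp ws"
  have Wc: "W \<in> carrier G" using W_def alt_set[OF ws(1)] by simp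
  define D where "D = (\<lambda>y. W \<otimes> y) ` (H \<union> Tset d)"
  define E where "E = (\<lambda>y. W \<otimes> y) ` Tset (Suc d)"
  have DE: "D \<union> E = carrier G"
  proof
    show "D \<union> E \<subseteq> carrier G" unfolding D_def E_def using Wc H_carrier Tset_carrier by auto
  next
    show "carrier G \<subseteq> D \<union> E"
    proof
      fix x assume xc: "x \<in> carrier G"
      have ix: "inv W \<otimes> x \<in> carrier G" using xc Wc by simp
      have x: "x = W \<otimes> (inv W \<otimes> x)" using xc Wc by (simp add: m_assoc[symmetric])
      have T01: "Tset 0 \<union> Tset 1 = Tset d \<union> Tset (Suc d)"
      proof (cases "even d")
        case True
        have "Tset 0 = Tset d" by (rule Tset_cong) (simp add: True)
        moreover have "Tset 1 = Tset (Suc d)" by (rule Tset_cong) (simp add: True)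
        ultimately show ?thesis by simp
      next
        case False
        have "Tset 0 = Tset (Suc d)" by (rule Tset_cong) (simp add: False)
        moreover have "Tset 1 = Tset d" by (rule Tset_cong) (simp add: False)
        ultimately show ?thesis by blast
      qed
      have "inv W \<otimes> x \<in> H \<union> (Tset 0 \<union> Tset 1)" using carrier_split[OF ix] by blast
      then have "inv W \<otimes> x \<in> H \<union> Tset d \<union> Tset (Suc d)" using T01 by blast
      then show "x \<in> D \<union> E" unfolding D_def E_def using x by blast
    qed
  qed
  have inj: "W \<otimes> y = W \<otimes> y' \<Longrightarrow> y \<in> carrier G \<Longrightarrow> y' \<in> carrier G \<Longrightarrow> y = y'" for y y'
    using Wc by simp
  have DE0: "D \<inter> E = {}"
  proof (rule ccontr)
    assume "D \<inter> E \<noteq> {}"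
    then obtain x where "x \<in> D" "x \<in> E" by blast
    then obtain y y' where y: "y \<in> H \<union> Tset d" "y' \<in> Tset (Suc d)" "W \<otimes> y = W \<otimes> y'"
      unfolding D_def E_def by blast
    have "y \<in> carrier G" "y' \<in> carrier G" using y H_carrier Tset_carrier by auto
    then have "y = y'" using inj y(3) by blast
    then show False using y Hset_disj by blast
  qed
  have FD: "\<forall>f\<in>F. (f <# D) \<inter> D = {}"
  proof (intro ballI)
    fix f assume f: "f \<in> F"
    have fc: "f \<in> carrier G" using f Fk by auto
    have gf: "good (cj W f) d" using ws(3) f W_def d_def by simp
    show "(f <# D) \<inter> D = {}"
    proof (rule ccontr)
      assume "(f <# D) \<inter> D \<noteq> {}"
      then obtain x where x: "x \<in> f <# D" "x \<in> D" by blast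
      obtain u where u: "u \<in> D" "x = f \<otimes> u" using x(1) unfolding lcos_mem by blast
      obtain y where yy: "y \<in> H \<union> Tset d" "u = W \<otimes> y" using u(1) unfolding D_def by blast
      obtain y' where yy': "y' \<in> H \<union> Tset d" "x = W \<otimes> y'" using x(2) unfolding D_def by blast
      have y: "y \<in> H \<union> Tset d" "y' \<in> H \<union> Tset d" "f \<otimes> (W \<otimes> y) = W \<otimes> y'"
        using yy yy' u by auto
      have yc: "y \<in> carrier G" "y' \<in> carrier G" using y H_carrier Tset_carrier by auto
      have "W \<otimes> (cj W f \<otimes> y) = W \<otimes> y'" using cj_comm[OF Wc fc yc(1)] y(3) by simp
      moreover have "cj W f \<otimes> y \<in> carrier G" using yc fc Wc by simp
      ultimately have "cj W f \<otimes> y = y'" using inj yc(2) by blast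
      moreover have "cj W f \<otimes> y \<in> Tset (Suc d)" using good_mult[OF gf y(1)] .
      ultimately show False using Hset_disj y(2) by simp
    qed
  qed
  obtain c where c: "c \<in> ty d" "c \<notin> H" using ex_ty by blast
  obtain w where w: "w \<in> ty d" "w \<notin> H" "w \<otimes> inv (inv c) \<notin> H"
    using ws(2) ty_inv[OF c(1)] unfolding three_def d_def by blast
  obtain a where a: "a \<in> ty (Suc d)" "a \<notin> H" using ex_ty by blast
  have cc: "c \<in> carrier G" "w \<in> carrier G" "a \<in> carrier G"
    using c(1) w(1) a(1) typ_carrier[of d] typ_carrier[of "Suc d"] by blast+
  define c' where "c' = inv w"
  have c'1: "c' \<in> ty d" "c' \<notin> H" using inv_ty w unfolding c'_def by auto
  have c'c: "c' \<in> carrier G" using c'1 tyc by blast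
  have c'2: "inv c \<otimes> c' \<notin> H"
  proof
    assume "inv c \<otimes> c' \<in> H"
    then have "inv (inv c \<otimes> c') \<in> H" using subgroup.m_inv_closed[OF sgH] by blast
    then show False using w(3) cc unfolding c'_def by (simp add: inv_mult_group)
  qed
  define P where "P = c \<otimes> a"
  have Pc: "P \<in> carrier G" using cc P_def by simp
  define g where "g = (\<lambda>i::nat. W \<otimes> (P [^] i \<otimes> c') \<otimes> inv W)"
  have gc: "\<forall>i<k. g i \<in> carrier G" unfolding g_def using Wc Pc c'c by simp
  have lt: "(g i <# E) \<inter> (g j <# E) = {}" if ij: "i < j" for i j
  proof (rule ccontr)
    assume "(g i <# E) \<inter> (g j <# E) \<noteq> {}"
    then obtain x where x: "x \<in> g i <# E" "x \<in> g j <# E" by blast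
    obtain u where u: "u \<in> E" "x = g i \<otimes> u" using x(1) unfolding lcos_mem by blast
    obtain u' where u': "u' \<in> E" "x = g j \<otimes> u'" using x(2) unfolding lcos_mem by blast
    obtain t where tt: "t \<in> Tset (Suc d)" "u = W \<otimes> t" using u(1) unfolding E_def by blast
    obtain t' where tt': "t' \<in> Tset (Suc d)" "u' = W \<otimes> t'" using u'(1) unfolding E_def by blast
    have t: "t \<in> Tset (Suc d)" "t' \<in> Tset (Suc d)" "g i \<otimes> (W \<otimes> t) = g j \<otimes> (W \<otimes> t')"
      using tt tt' u u' by auto
    have tc: "t \<in> carrier G" "t' \<in> carrier G" using t Tset_carrier by auto
    define m where "m = j - i"
    have m1: "m \<ge> 1" and jm: "j = i + m" using ij m_def by auto
    obtain Kw where Kw: "alt (Suc d) Kw" "even (length Kw)" "wp Kw = inv (P [^] m) \<otimes> c'"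
      using Kword[OF _ _ c'1(1) c'2 m1] a c P_def by auto
    have Kc': "set Kw \<subseteq> carrier G" using alt_set[OF Kw(1)] .
    have pm: "P [^] j = P [^] i \<otimes> P [^] m" using jm Pc by (simp add: nat_pow_mult)
    have e1: "g i \<otimes> (W \<otimes> t) = W \<otimes> (P [^] i \<otimes> c' \<otimes> t)"
      unfolding g_def using Wc Pc c'c tc by (simp add: m_assoc)
    have e2: "g j \<otimes> (W \<otimes> t') = W \<otimes> (P [^] i \<otimes> (P [^] m \<otimes> (c' \<otimes> t')))"
      unfolding g_def using Wc Pc c'c tc pm by (simp add: m_assoc)
    have "P [^] i \<otimes> c' \<otimes> t = P [^] i \<otimes> (P [^] m \<otimes> (c' \<otimes> t'))"
      using t(3) e1 e2 Wc Pc c'c tc by simp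
    then have "c' \<otimes> t = P [^] m \<otimes> (c' \<otimes> t')" using Pc c'c tc by (simp add: m_assoc)
    then have "inv c' \<otimes> (inv (P [^] m) \<otimes> c') \<otimes> t = t'"
      using Pc c'c tc by (simp add: m_assoc)
    then have eq: "wp (inv c' # Kw) \<otimes> t = t'" using Kw(3) by simp
    have "alt (Suc (Suc d)) (inv c' # Kw)" using inv_ty[of c' d] c'1 Kw(1) alt_cong[of "Suc (Suc (Suc d))" "Suc d"]
      by (simp add: alt_Cons)
    moreover have "odd (length (inv c' # Kw))" using Kw(2) by simp
    ultimately have "good (wp (inv c' # Kw)) (Suc d)" unfolding good_def by blast
    then have "wp (inv c' # Kw) \<otimes> t \<in> Tset (Suc (Suc d))" using good_mult t(1) by blast
    then have "t' \<in> Tset d" using eq Tset_Suc2 by simp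
    then show False using t(2) Tset_disj by blast
  qed
  have "\<forall>i<k. \<forall>i'<k. i \<noteq> i' \<longrightarrow> (g i <# E) \<inter> (g i' <# E) = {}"
  proof (intro allI impI)
    fix i i' assume "i < k" "i' < k" "i \<noteq> i'"
    then show "(g i <# E) \<inter> (g i' <# E) = {}" using lt[of i i'] lt[of i' i] by (cases "i < i'") auto
  qed
  then show "\<exists>D E g. D \<union> E = carrier G \<and> D \<inter> E = {} \<and>
           (\<forall>f\<in>F. (f <# D) \<inter> D = {}) \<and>
           (\<forall>i<k. g i \<in> carrier G) \<and>
           (\<forall>i<k. \<forall>i'<k. i \<noteq> i' \<longrightarrow> (g i <# E) \<inter> (g i' <# E) = {})"
    using DE DE0 FD gc by blast
qed


lemma pp1: assumes Xf: "\<forall>s\<in>S. s <# Y \<subseteq> Xf s \<and> Xf s \<subseteq> Y" and S: "S \<subseteq> carrier G" and Y: "Y \<subseteq> carrier G"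
  shows "xs \<noteq> [] \<Longrightarrow> set xs \<subseteq> S \<Longrightarrow> y \<in> Y \<Longrightarrow> wp xs \<otimes> y \<in> Xf (hd xs)"
proof (induction xs)
  case Nil then show ?case by simp
next
  case (Cons s xs)
  have sc: "s \<in> carrier G" using Cons S by auto
  have yc: "y \<in> carrier G" using Cons Y by auto
  have xsc: "set xs \<subseteq> carrier G" using Cons S by auto
  show ?case
  proof (cases xs)
    case Nil
    then have e: "wp (s # xs) \<otimes> y = s \<otimes> y" using sc yc by simp
    have "s \<otimes> y \<in> s <# Y" using Cons.prems unfolding lcos_mem by auto
    then show ?thesis using Cons.prems Xf Nil e by auto
  next
    case (Cons x xs')
    then have "wp xs \<otimes> y \<in> Xf (hd xs)" using Cons.IH Cons.prems by simp
    then have "wp xs \<otimes> y \<in> Y" using Xf Cons.prems \<open>xs = x # xs'\<close> by auto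
    moreover have "wp (s # xs) \<otimes> y = s \<otimes> (wp xs \<otimes> y)" using sc yc xsc by (simp add: m_assoc)
    ultimately have "wp (s # xs) \<otimes> y \<in> s <# Y" unfolding lcos_mem by blast
    then show ?thesis using Xf Cons.prems by auto
  qed
qed

lemma pingpong: assumes S: "S \<subseteq> carrier G" and Y: "Y \<subseteq> carrier G"
  and Xf: "\<forall>s\<in>S. s <# Y \<subseteq> Xf s \<and> Xf s \<subseteq> Y"
  and Dj: "\<forall>s\<in>S. \<forall>s'\<in>S. s \<noteq> s' \<longrightarrow> Xf s \<inter> Xf s' = {}"
  and y0: "y0 \<in> Y" "\<forall>s\<in>S. y0 \<notin> Xf s"
  shows "free_semigroup_on G S"
  unfolding free_semigroup_on_def
proof (intro allI impI)
  fix xs ys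
  assume a: "xs \<noteq> [] \<and> ys \<noteq> [] \<and> set xs \<subseteq> S \<and> set ys \<subseteq> S \<and> wp xs = wp ys"
  have y0c: "y0 \<in> carrier G" using y0 Y by auto
  show "xs = ys" using a
  proof (induction xs arbitrary: ys)
    case Nil then show ?case by simp
  next
    case (Cons x xs)
    obtain y ys' where yy: "ys = y # ys'" using Cons.prems by (cases ys) auto
    have xc: "x \<in> carrier G" "y \<in> carrier G" using Cons.prems yy S by auto
    have xsc: "set xs \<subseteq> carrier G" "set ys' \<subseteq> carrier G" using Cons.prems yy S by auto
    have "wp (x # xs) \<otimes> y0 \<in> Xf x" using pp1[OF Xf S Y, of "x # xs" y0] Cons.prems y0 by auto
    moreover have "wp (y # ys') \<otimes> y0 \<in> Xf y" using pp1[OF Xf S Y, of "y # ys'" y0] Cons.prems y0 yy by auto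
    ultimately have xy: "x = y" using Dj Cons.prems yy by auto
    have e: "wp xs = wp ys'" using Cons.prems yy xy xc xsc by simp
    show ?case
    proof (cases "xs = []")
      case True
      show ?thesis
      proof (cases "ys' = []")
        case True then show ?thesis using \<open>xs = []\<close> yy xy by simp
      next
        case False
        have "wp ys' \<otimes> y0 \<in> Xf (hd ys')" using pp1[OF Xf S Y, of ys' y0] False Cons.prems yy y0 by auto
        moreover have "wp ys' = \<one>" using e \<open>xs = []\<close> by simp
        then have "wp ys' \<otimes> y0 = y0" using y0c by simp
        moreover have "hd ys' \<in> S" using False Cons.prems yy by auto
        ultimately show ?thesis using y0 by auto
      qed
    next
      case False
      show ?thesis
      proof (cases "ys' = []")
        case True
        have "wp xs \<otimes> y0 \<in> Xf (hd xs)" using pp1[OF Xf S Y, of xs y0] False Cons.prems y0 by auto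
        moreover have "wp xs = \<one>" using e True by simp
        then have "wp xs \<otimes> y0 = y0" using y0c by simp
        moreover have "hd xs \<in> S" using False Cons.prems by auto
        ultimately show ?thesis using y0 by auto
      next
        case ne: False
        have "xs = ys'" using Cons.IH[of ys'] False ne Cons.prems yy e by auto
        then show ?thesis using yy xy by simp
      qed
    qed
  qed
qed

lemma cj_mul: "W \<in> carrier G \<Longrightarrow> a \<in> carrier G \<Longrightarrow> b \<in> carrier G \<Longrightarrow> cj W (a \<otimes> b) = cj W a \<otimes> cj W b"
  unfolding cj_def by (simp add: m_assoc)

lemma cj_invm: "W \<in> carrier G \<Longrightarrow> a \<in> carrier G \<Longrightarrow> cj W (inv a) = inv (cj W a)"
  unfolding cj_def by (simp add: inv_mult_group m_assoc)

lemma fsp_no1: assumes K: Kc and F: "finite F" "F \<subseteq> carrier G" "\<one> \<notin> F"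
  shows "\<exists>g\<in>carrier G. free_semigroup_on G (g <# F)"
proof -
  define F2 where "F2 = (\<lambda>p. inv (snd p) \<otimes> fst p) ` {p \<in> F \<times> F. fst p \<noteq> snd p}"
  have f2: "finite F2" unfolding F2_def using F(1) by (intro finite_imageI) (auto intro: finite_subset[of _ "F \<times> F"])
  have f2c: "F2 \<subseteq> carrier G - {\<one>}"
  proof
    fix z assume "z \<in> F2"
    then obtain f f' where ff: "f \<in> F" "f' \<in> F" "f \<noteq> f'" "z = inv f' \<otimes> f" unfolding F2_def by auto
    have fc: "f \<in> carrier G" "f' \<in> carrier G" using ff F by auto
    have "z \<noteq> \<one>"
    proof
      assume "z = \<one>"
      then have "f' \<otimes> (inv f' \<otimes> f) = f' \<otimes> \<one>" using ff by simp
      then show False using fc ff(3) by simp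
    qed
    then show "z \<in> carrier G - {\<one>}" using ff fc by simp
  qed
  have "finite (F \<union> F2)" "F \<union> F2 \<subseteq> carrier G - {\<one>}" using F f2 f2c by auto
  then obtain ws where ws: "alt 0 ws" "\<forall>f\<in>F \<union> F2. good (cj (wp ws) f) (length ws)" using common[OF K] by blast
  define d where "d = length ws"
  define W where "W = wp ws"
  have Wc: "W \<in> carrier G" using W_def alt_set[OF ws(1)] by simp
  have gd: "\<And>f. f \<in> F \<union> F2 \<Longrightarrow> good (cj W f) d" using ws(2) W_def d_def by simp
  obtain c where c: "c \<in> ty d" "c \<notin> H" using ex_ty by blast
  have cc: "c \<in> carrier G" using c tyc by blast
  have ca: "alt d [c]" using c by (simp add: alt_single)
  define g where "g = W \<otimes> c \<otimes> inv W"
  have gc: "g \<in> carrier G" using g_def Wc cc by simp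
  define Y where "Y = (\<lambda>y. W \<otimes> y) ` (H \<union> Tset d)"
  have Yc: "Y \<subseteq> carrier G" unfolding Y_def using Wc H_carrier Tset_carrier by auto
  have key: "(g \<otimes> f) \<otimes> (W \<otimes> y) = W \<otimes> (c \<otimes> (cj W f \<otimes> y))" if "f \<in> carrier G" "y \<in> carrier G" for f y
  proof -
    have "(g \<otimes> f) \<otimes> (W \<otimes> y) = (W \<otimes> c \<otimes> inv W) \<otimes> (f \<otimes> (W \<otimes> y))" using that gc Wc g_def by (simp add: m_assoc)
    also have "\<dots> = (W \<otimes> c \<otimes> inv W) \<otimes> (W \<otimes> (cj W f \<otimes> y))" using cj_comm[OF Wc that] by simp
    also have "\<dots> = W \<otimes> (c \<otimes> (cj W f \<otimes> y))" using that Wc cc by (simp add: m_assoc)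
    finally show ?thesis .
  qed
  have inT: "c \<otimes> (cj W f \<otimes> y) \<in> Tset d" if "f \<in> F" "y \<in> H \<union> Tset d" for f y
  proof -
    have "cj W f \<otimes> y \<in> Tset (Suc d)" using good_mult[OF gd] that by blast
    then have "wp [c] \<otimes> (cj W f \<otimes> y) \<in> Tset d" using app_T[OF ca] by simp
    then show ?thesis using cc by simp
  qed
  let ?S = "g <# F"
  let ?X = "\<lambda>s. s <# Y"
  have Sc: "?S \<subseteq> carrier G" using F gc l_coset_subset_G by blast
  have X1: "\<forall>s\<in>?S. s <# Y \<subseteq> ?X s \<and> ?X s \<subseteq> Y"
  proof
    fix s assume "s \<in> ?S"
    then obtain f where f: "f \<in> F" "s = g \<otimes> f" unfolding lcos_mem by blast
    have fc: "f \<in> carrier G" using f F by auto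
    have "s <# Y \<subseteq> Y"
    proof
      fix x assume "x \<in> s <# Y"
      then obtain y where y: "y \<in> H \<union> Tset d" "x = s \<otimes> (W \<otimes> y)" unfolding lcos_mem Y_def by blast
      have yc: "y \<in> carrier G" using y H_carrier Tset_carrier by auto
      have "x = W \<otimes> (c \<otimes> (cj W f \<otimes> y))" using y f key fc yc by simp
      then show "x \<in> Y" unfolding Y_def using inT[OF f(1) y(1)] by blast
    qed
    then show "s <# Y \<subseteq> ?X s \<and> ?X s \<subseteq> Y" by simp
  qed
  have Dj: "\<forall>s\<in>?S. \<forall>s'\<in>?S. s \<noteq> s' \<longrightarrow> ?X s \<inter> ?X s' = {}"
  proof (intro ballI impI)
    fix s s' assume ss: "s \<in> ?S" "s' \<in> ?S" "s \<noteq> s'"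
    obtain f where f: "f \<in> F" "s = g \<otimes> f" using ss(1) unfolding lcos_mem by blast
    obtain f' where f': "f' \<in> F" "s' = g \<otimes> f'" using ss(2) unfolding lcos_mem by blast
    have ff: "f \<noteq> f'" using f f' ss(3) by blast
    have fc: "f \<in> carrier G" "f' \<in> carrier G" using f f' F by auto
    show "?X s \<inter> ?X s' = {}"
    proof (rule ccontr)
      assume "?X s \<inter> ?X s' \<noteq> {}"
      then obtain x where x: "x \<in> ?X s" "x \<in> ?X s'" by blast
      obtain y where y: "y \<in> H \<union> Tset d" "x = s \<otimes> (W \<otimes> y)" using x(1) unfolding lcos_mem Y_def by blast
      obtain y' where y': "y' \<in> H \<union> Tset d" "x = s' \<otimes> (W \<otimes> y')" using x(2) unfolding lcos_mem Y_def by blast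
      have yc: "y \<in> carrier G" "y' \<in> carrier G" using y y' H_carrier Tset_carrier by auto
      have cf: "cj W f \<in> carrier G" "cj W f' \<in> carrier G" using fc Wc by auto
      have "W \<otimes> (c \<otimes> (cj W f \<otimes> y)) = W \<otimes> (c \<otimes> (cj W f' \<otimes> y'))"
        using key fc yc y y' f f' by simp
      then have "cj W f \<otimes> y = cj W f' \<otimes> y'" using Wc cc cf yc by simp
      then have "inv (cj W f') \<otimes> (cj W f \<otimes> y) = y'" using cf yc by simp
      moreover have "inv (cj W f') \<otimes> (cj W f \<otimes> y) = cj W (inv f' \<otimes> f) \<otimes> y"
        using cj_mul[OF Wc _ fc(1), of "inv f'"] cj_invm[OF Wc fc(2)] cf yc fc Wc by (simp add: m_assoc)
      moreover have "inv f' \<otimes> f \<in> F2" unfolding F2_def using f f' ff by force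
      ultimately have "y' \<in> Tset (Suc d)" using good_mult[OF gd y(1)] by auto
      then show False using Hset_disj y'(1) by blast
    qed
  qed
  have y0: "W \<in> Y" unfolding Y_def using subgroup.one_closed[OF sgH] Wc by (intro image_eqI[of _ _ \<one>]) auto
  have y0': "\<forall>s\<in>?S. W \<notin> ?X s"
  proof (intro ballI notI)
    fix s assume s: "s \<in> ?S" "W \<in> ?X s"
    obtain f where f: "f \<in> F" "s = g \<otimes> f" using s(1) unfolding lcos_mem by blast
    have fc: "f \<in> carrier G" using f F by auto
    obtain y where y: "y \<in> H \<union> Tset d" "W = s \<otimes> (W \<otimes> y)" using s(2) unfolding lcos_mem Y_def by blast
    have yc: "y \<in> carrier G" using y H_carrier Tset_carrier by auto
    have t: "c \<otimes> (cj W f \<otimes> y) \<in> Tset d" using inT[OF f(1) y(1)] .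
    have "W \<otimes> (c \<otimes> (cj W f \<otimes> y)) = W \<otimes> \<one>" using y key fc yc f Wc by simp
    then have "c \<otimes> (cj W f \<otimes> y) = \<one>" using Wc t Tset_carrier by (meson l_cancel one_closed subsetD)
    then show False using t Tset_H subgroup.one_closed[OF sgH] by metis
  qed
  have "free_semigroup_on G ?S" using pingpong[OF Sc Yc X1 Dj y0 y0'] .
  then show ?thesis using gc by blast
qed


lemma powword: assumes c: "c \<in> ty 0 - H" and a: "a \<in> ty 1 - H"
  shows "n \<ge> 1 \<Longrightarrow> \<exists>L. alt 0 L \<and> L \<noteq> [] \<and> even (length L) \<and> wp L = (c \<otimes> a) [^] (n::nat)"
proof (induction n)
  case 0 then show ?case by simp
next
  case (Suc n)
  have cc: "c \<in> carrier G" "a \<in> carrier G" using c a typ_carrier[of 0] typ_carrier[of 1] by blast+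
  have ca: "alt 0 [c, a]" using c a by (simp add: alt_Cons)
  show ?case
  proof (cases "n = 0")
    case True
    then show ?thesis using ca cc by (intro exI[of _ "[c, a]"]) simp
  next
    case False
    then obtain L where L: "alt 0 L" "L \<noteq> []" "even (length L)" "wp L = (c \<otimes> a) [^] n" using Suc by auto
    have "alt (0 + length L) [c, a]" using ca alt_cong[of "0 + length L" 0] L(3) by simp
    then have "alt 0 (L @ [c, a])" using L(1) by (simp add: alt_append)
    moreover have "wp (L @ [c, a]) = (c \<otimes> a) [^] Suc n" using L(4) cc alt_set[OF L(1)] by (simp add: wp_append)
    ultimately show ?thesis using L(3) by (intro exI[of _ "L @ [c, a]"]) simp
  qed
qed

lemma infinite_carrier: "infinite (carrier G)"
proof -
  obtain c where c: "c \<in> ty 0 - H" using ex_ty by blast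
  obtain a where a: "a \<in> ty 1 - H" using ex_ty by blast
  have cc: "c \<in> carrier G" "a \<in> carrier G" using c a typ_carrier[of 0] typ_carrier[of 1] by blast+
  define P where "P = c \<otimes> a"
  have Pc: "P \<in> carrier G" using cc P_def by simp
  have ne: "P [^] (k::nat) \<noteq> \<one>" if k1: "k \<ge> 1" for k
  proof -
    obtain L where L: "alt 0 L" "L \<noteq> []" "wp L = P [^] k" using powword[OF c a k1] P_def by blast
    then show ?thesis using ax[OF L(1,2)] subgroup.one_closed[OF sgH] by auto
  qed
  have "inj (\<lambda>n::nat. P [^] n)"
  proof (rule injI)
    fix n m :: nat assume e: "P [^] n = P [^] m"
    show "n = m"
    proof (rule ccontr)
      assume "n \<noteq> m"
      then consider "n < m" | "m < n" by arith
      then show False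
      proof cases
        case 1
        then have "P [^] m = P [^] n \<otimes> P [^] (m - n)" using Pc by (simp add: nat_pow_mult)
        then have "P [^] n \<otimes> P [^] (m - n) = P [^] n \<otimes> \<one>" using e Pc by simp
        then have "P [^] (m - n) = \<one>" using Pc by (meson l_cancel nat_pow_closed one_closed)
        then show False using ne[of "m - n"] 1 by simp
      next
        case 2
        then have "P [^] n = P [^] m \<otimes> P [^] (n - m)" using Pc by (simp add: nat_pow_mult)
        then have "P [^] m \<otimes> P [^] (n - m) = P [^] m \<otimes> \<one>" using e Pc by simp
        then have "P [^] (n - m) = \<one>" using Pc by (meson l_cancel nat_pow_closed one_closed)
        then show False using ne[of "n - m"] 2 by simp
      qed
    qed
  qed
  then have "infinite (range (\<lambda>n::nat. P [^] n))" using finite_imageD by blast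
  moreover have "range (\<lambda>n::nat. P [^] n) \<subseteq> carrier G" using Pc by auto
  ultimately show ?thesis using finite_subset by blast
qed

lemma fsp: assumes K: Kc shows "free_semigroup_property G"
  unfolding free_semigroup_property_def
proof (intro allI impI)
  fix F assume F: "finite F \<and> F \<subseteq> carrier G"
  have "finite ((\<lambda>f. inv f) ` F)" using F by simp
  then have "carrier G - (\<lambda>f. inv f) ` F \<noteq> {}" using infinite_carrier
    by (metis Diff_eq_empty_iff finite_subset)
  then obtain a where a: "a \<in> carrier G" "a \<notin> (\<lambda>f. inv f) ` F" by blast
  have F'c: "a <# F \<subseteq> carrier G" using F a l_coset_subset_G by blast
  have "\<one> \<notin> a <# F"
  proof
    assume "\<one> \<in> a <# F"
    then obtain f where f: "f \<in> F" "\<one> = a \<otimes> f" unfolding lcos_mem by blast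
    have "inv f = a" using inv_equality[of a f] f F a by auto
    then show False using a f by blast
  qed
  moreover have "finite (a <# F)" unfolding l_coset_def using F by simp
  ultimately obtain g' where g': "g' \<in> carrier G" "free_semigroup_on G (g' <# (a <# F))"
    using fsp_no1[OF K] F'c by blast
  have "g' <# (a <# F) = (g' \<otimes> a) <# F" using lcos_m_assoc F g' a by blast
  then show "\<exists>g\<in>carrier G. free_semigroup_on G (g <# F)" using g' a by (intro bexI[of _ "g' \<otimes> a"]) auto
qed

end

theorem theorem3p2:
  fixes G :: "('a, 'b) monoid_scheme" and G0 G1 H :: "'a set"
  assumes "amalgam G G0 G1 H"
    and "nondegenerate G G0 G1 H"
  shows "((K_set G G0 G1 H 0 = {\<one>\<^bsub>G\<^esub>} \<and> K_set G G0 G1 H 1 = {\<one>\<^bsub>G\<^esub>}) \<longleftrightarrow>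
            (\<forall>F. finite F \<and> F \<subseteq> carrier G - {\<one>\<^bsub>G\<^esub>} \<longrightarrow>
               (\<exists>g\<in>carrier G. conj_set G g F \<inter> H = {})))
       \<and> ((\<forall>F. finite F \<and> F \<subseteq> carrier G - {\<one>\<^bsub>G\<^esub>} \<longrightarrow>
               (\<exists>g\<in>carrier G. conj_set G g F \<inter> H = {})) \<longleftrightarrow>
            (\<forall>F. finite F \<and> F \<subseteq> H - {\<one>\<^bsub>G\<^esub>} \<longrightarrow>
               (\<exists>g\<in>carrier G. conj_set G g F \<inter> H = {})))
       \<and> ((K_set G G0 G1 H 0 = {\<one>\<^bsub>G\<^esub>} \<and> K_set G G0 G1 H 1 = {\<one>\<^bsub>G\<^esub>}) \<longrightarrow>
            powers_group G \<and> free_semigroup_property G)"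
proof -
  interpret amalgN G G0 G1 H using assms by (unfold_locales) auto
  let ?i = "K_set G G0 G1 H 0 = {\<one>\<^bsub>G\<^esub>} \<and> K_set G G0 G1 H 1 = {\<one>\<^bsub>G\<^esub>}"
  let ?ii = "\<forall>F. finite F \<and> F \<subseteq> carrier G - {\<one>\<^bsub>G\<^esub>} \<longrightarrow> (\<exists>g\<in>carrier G. conj_set G g F \<inter> H = {})"
  let ?iii = "\<forall>F. finite F \<and> F \<subseteq> H - {\<one>\<^bsub>G\<^esub>} \<longrightarrow> (\<exists>g\<in>carrier G. conj_set G g F \<inter> H = {})"
  have i_ii: "?i \<Longrightarrow> ?ii" using K_Kc Kc_ii by blast
  have ii_iii: "?ii \<Longrightarrow> ?iii" using H_carrier by blast
  have iii_i: "?iii \<Longrightarrow> ?i" using iii_K by blast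
  have "?i \<Longrightarrow> powers_group G \<and> free_semigroup_property G" using K_Kc powers fsp by blast
  then show ?thesis using i_ii ii_iii iii_i by blast
qed

end
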